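(* Let $D\subseteq\mathbb{R}^{p+2}$ be an open set invariant under $(\mathbf{x}_p,r)\mapsto(\mathbf{x}_p,-r)$ and let $f(\mathbf{x})=F_1(\mathbf{x}')+\underline{\omega}F_2(\mathbf{x}')$ be generalized partial-slice regular on $\Omega_D$. For $k\in\mathbb{N}$ set $A_k(\mathbf{x}')=(\frac1r\partial_r)^kF_1(\mathbf{x}')$ and $B_k(\mathbf{x}')=(\partial_r\frac1r)^kF_2(\mathbf{x}')$. Then for all $k\in\mathbb{N}$ and $\mathbf{x}\in\Omega_D$, $$D_{\mathbf{x}_p}A_k(\mathbf{x}')-\partial_rB_k(\mathbf{x}')=\frac{2k}{r}B_k(\mathbf{x}'),\qquad \overline{D}_{\mathbf{x}_p}B_k(\mathbf{x}')+\partial_rA_k(\mathbf{x}')=0,$$ with values at $r=0$ understood as limits $r\to0$.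
   Context: Let $\mathbb{A}$ be a real alternative algebra (the associator $[a,b,c]=(ab)c-a(bc)$ is an alternating trilinear function) with unity $1$, of finite real dimension $d>1$, equipped with an anti-involution $a\mapsto a^c$ (real linear, $a^c=a$ for real $a$, $(a^c)^c=a$, $(ab)^c=b^ca^c$). Let $t(x)=x+x^c$, $n(x)=xx^c$, $\mathbb{S}_{\mathbb{A}}=\{x: t(x)=0,\ n(x)=1\}$ (assumed nonempty) and $Q_{\mathbb{A}}=\mathbb{R}\cup\{x: t(x)\in\mathbb{R},\ n(x)\in\mathbb{R},\ 4n(x)>t(x)^2\}$. Let $M$ be a real subspace with $\mathbb{R}\subsetneq M\subseteq Q_{\mathbb{A}}$ having a basis $(v_0,\dots,v_m)$, $m\ge1$, $v_0=1$, $v_s\in\mathbb{S}_{\mathbb{A}}$, $v_sv_t=-v_tv_s$ for distinct $s,t\ge1$; complete it to a basis of $\mathbb{A}$ with associated Euclidean norm. Identify $x=\sum x_sv_s\in M$ with $(x_0,\dots,x_m)\in\mathbb{R}^{m+1}$; differentiate componentwise. Fix $p\in\{0,\dots,m-1\}$, $q=m-p$; $\mathbf{x}=\mathbf{x}_p+\underline{\mathbf{x}}_q$ with $\mathbf{x}_p=\sum_{s=0}^px_sv_s\in\mathbb{R}^{p+1}$, $\underline{\mathbf{x}}_q=\sum_{s=p+1}^m x_sv_s$; $\mathbb{S}=\{\sum_{s=p+1}^m x_sv_s:\sum x_s^2=1\}$; $\underline{\mathbf{x}}_q=r\underline{\omega}$, $r=|\underline{\mathbf{x}}_q|$; $\mathbf{x}'=(\mathbf{x}_p,r)$.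 $D_{\mathbf{x}_p}f=\sum_{s=0}^p v_s\partial_{x_s}f$, $\overline{D}_{\mathbf{x}_p}f=\partial_{x_0}f-\sum_{s=1}^pv_s\partial_{x_s}f$; $(\partial_r\frac1r)G=\partial_r(G/r)$. $\Omega_D=\{\mathbf{x}_p+r\underline{\omega}:(\mathbf{x}_p,r)\in D,\ r\ge0,\ \underline{\omega}\in\mathbb{S}\}$. A stem function $(F_1,F_2):D\to\mathbb{A}^2$ has $F_1$ even and $F_2$ odd in $r$ and induces $f(\mathbf{x}_p+r\underline{\omega})=F_1(\mathbf{x}')+\underline{\omega}F_2(\mathbf{x}')$; $f$ is generalized partial-slice regular if $F\in C^1$ and $D_{\mathbf{x}_p}F_1-\partial_rF_2=0$, $\overline{D}_{\mathbf{x}_p}F_2+\partial_rF_1=0$ on $D$ (such $F_1,F_2$ are real analytic). *)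

theory Defs
  imports "HOL-Analysis.Analysis"
begin

text \<open>The real alternative algebra A is modelled as a finite-dimensional real
vector space (type 'a, euclidean_space) with a bilinear product mul, a unity one
(real numbers are embedded as c *R one) and an anti-involution cj.\<close>

definition associator :: "('a::real_vector \<Rightarrow> 'a \<Rightarrow> 'a) \<Rightarrow> 'a \<Rightarrow> 'a \<Rightarrow> 'a \<Rightarrow> 'a" where
  "associator mul a b c = mul (mul a b) c - mul a (mul b c)"

definition alt_algebra_inv ::
  "('a::euclidean_space \<Rightarrow> 'a \<Rightarrow> 'a) \<Rightarrow> 'a \<Rightarrow> ('a \<Rightarrow> 'a) \<Rightarrow> bool" where
  "alt_algebra_inv mul one cj \<longleftrightarrow>
     bilinear mul \<and>
     (\<forall>x. mul one x = x \<and> mul x one = x) \<and>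
     (\<forall>a b c. associator mul b a c = - associator mul a b c \<and>
              associator mul a c b = - associator mul a b c \<and>
              associator mul c b a = - associator mul a b c) \<and>
     linear cj \<and>
     (\<forall>c::real. cj (c *\<^sub>R one) = c *\<^sub>R one) \<and>
     (\<forall>x. cj (cj x) = x) \<and>
     (\<forall>x y. cj (mul x y) = mul (cj y) (cj x))"

definition is_real :: "'a::real_vector \<Rightarrow> 'a \<Rightarrow> bool" where
  "is_real one x \<longleftrightarrow> (\<exists>c::real. x = c *\<^sub>R one)"

definition trA :: "('a::real_vector \<Rightarrow> 'a) \<Rightarrow> 'a \<Rightarrow> 'a" where
  "trA cj x = x + cj x"

definition nA :: "('a \<Rightarrow> 'a \<Rightarrow> 'a) \<Rightarrow> ('a \<Rightarrow> 'a) \<Rightarrow> 'a \<Rightarrow> 'a" where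
  "nA mul cj x = mul x (cj x)"

definition SA :: "('a::real_vector \<Rightarrow> 'a \<Rightarrow> 'a) \<Rightarrow> 'a \<Rightarrow> ('a \<Rightarrow> 'a) \<Rightarrow> 'a set" where
  "SA mul one cj = {x. trA cj x = 0 \<and> nA mul cj x = one}"

definition QA :: "('a::real_vector \<Rightarrow> 'a \<Rightarrow> 'a) \<Rightarrow> 'a \<Rightarrow> ('a \<Rightarrow> 'a) \<Rightarrow> 'a set" where
  "QA mul one cj = range (\<lambda>c::real. c *\<^sub>R one) \<union>
     {x. \<exists>a b::real. trA cj x = a *\<^sub>R one \<and> nA mul cj x = b *\<^sub>R one \<and> 4 * b > a\<^sup>2}"

definition slice_basis ::
  "('a::euclidean_space \<Rightarrow> 'a \<Rightarrow> 'a) \<Rightarrow> 'a \<Rightarrow> ('a \<Rightarrow> 'a) \<Rightarrow> (nat \<Rightarrow> 'a) \<Rightarrow> nat \<Rightarrow> bool" where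
  "slice_basis mul one cj v m \<longleftrightarrow>
     1 \<le> m \<and> v 0 = one \<and>
     (\<forall>s\<in>{1..m}. v s \<in> SA mul one cj) \<and>
     (\<forall>s\<in>{1..m}. \<forall>t\<in>{1..m}. s \<noteq> t \<longrightarrow> mul (v s) (v t) = - mul (v t) (v s)) \<and>
     inj_on v {0..m} \<and> independent (v ` {0..m}) \<and>
     span (v ` {0..m}) \<subseteq> QA mul one cj"

text \<open>Points x' = (x_p, r) of D are pairs: x_p = sum_{s<=p} x_s v_s (an element of
span{v_0..v_p}, identified with R^{p+1}) and r real.  The partial derivative in
the coordinate x_s is the directional derivative along (v s, 0); the partial
derivative in r is along (0, 1).\<close>

definition pd :: "('a::real_normed_vector \<times> real \<Rightarrow> 'b::real_normed_vector) \<Rightarrow> 'a \<times> real \<Rightarrow> 'a \<times> real \<Rightarrow> 'b" where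
  "pd F u x = vector_derivative (\<lambda>t. F (x + t *\<^sub>R u)) (at 0)"

definition dirs :: "(nat \<Rightarrow> 'a::real_vector) \<Rightarrow> nat \<Rightarrow> ('a \<times> real) set" where
  "dirs v p = {(v s, 0) | s. s \<le> p} \<union> {(0, 1)}"

definition dr :: "('a::real_normed_vector \<times> real \<Rightarrow> 'b::real_normed_vector) \<Rightarrow> 'a \<times> real \<Rightarrow> 'b" where
  "dr F x = pd F (0, 1) x"

definition C1_on :: "('a::real_normed_vector \<times> real) set \<Rightarrow> ('a \<times> real) set \<Rightarrow> ('a \<times> real \<Rightarrow> 'b::real_normed_vector) \<Rightarrow> bool" where
  "C1_on U D F \<longleftrightarrow> continuous_on D F \<and>
     (\<forall>u\<in>U. (\<forall>x\<in>D. (\<lambda>t. F (x + t *\<^sub>R u)) differentiable (at 0)) \<and> continuous_on D (pd F u))"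

primrec iter_pd :: "('a::real_normed_vector \<times> real) list \<Rightarrow> ('a \<times> real \<Rightarrow> 'b::real_normed_vector) \<Rightarrow> 'a \<times> real \<Rightarrow> 'b" where
  "iter_pd [] F = F"
| "iter_pd (u # us) F = pd (iter_pd us F) u"

definition Cinf_on :: "('a::real_normed_vector \<times> real) set \<Rightarrow> ('a \<times> real) set \<Rightarrow> ('a \<times> real \<Rightarrow> 'b::real_normed_vector) \<Rightarrow> bool" where
  "Cinf_on U D F \<longleftrightarrow> (\<forall>us. set us \<subseteq> U \<longrightarrow> C1_on U D (iter_pd us F))"

definition Dxp :: "('a::real_normed_vector \<Rightarrow> 'a \<Rightarrow> 'a) \<Rightarrow> (nat \<Rightarrow> 'a) \<Rightarrow> nat \<Rightarrow> ('a \<times> real \<Rightarrow> 'a) \<Rightarrow> 'a \<times> real \<Rightarrow> 'a" where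
  "Dxp mul v p F x = (\<Sum>s=0..p. mul (v s) (pd F (v s, 0) x))"

definition Dxp_bar :: "('a::real_normed_vector \<Rightarrow> 'a \<Rightarrow> 'a) \<Rightarrow> (nat \<Rightarrow> 'a) \<Rightarrow> nat \<Rightarrow> ('a \<times> real \<Rightarrow> 'a) \<Rightarrow> 'a \<times> real \<Rightarrow> 'a" where
  "Dxp_bar mul v p F x = pd F (v 0, 0) x - (\<Sum>s=1..p. mul (v s) (pd F (v s, 0) x))"

definition gps_regular_stem ::
  "('a::real_normed_vector \<Rightarrow> 'a \<Rightarrow> 'a) \<Rightarrow> (nat \<Rightarrow> 'a) \<Rightarrow> nat \<Rightarrow> ('a \<times> real) set \<Rightarrow>
   ('a \<times> real \<Rightarrow> 'a) \<Rightarrow> ('a \<times> real \<Rightarrow> 'a) \<Rightarrow> bool" where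
  "gps_regular_stem mul v p D F1 F2 \<longleftrightarrow>
     (\<forall>y r. (y, r) \<in> D \<longrightarrow> F1 (y, - r) = F1 (y, r) \<and> F2 (y, - r) = - F2 (y, r)) \<and>
     C1_on (dirs v p) D F1 \<and> C1_on (dirs v p) D F2 \<and>
     (\<forall>x\<in>D. Dxp mul v p F1 x - dr F2 x = 0 \<and> Dxp_bar mul v p F2 x + dr F1 x = 0)"

primrec Ak_seq :: "('a::real_normed_vector \<times> real \<Rightarrow> 'a) \<Rightarrow> nat \<Rightarrow> 'a \<times> real \<Rightarrow> 'a" where
  "Ak_seq F1 0 = F1"
| "Ak_seq F1 (Suc k) = (\<lambda>x. (1 / snd x) *\<^sub>R dr (Ak_seq F1 k) x)"

primrec Bk_seq :: "('a::real_normed_vector \<times> real \<Rightarrow> 'a) \<Rightarrow> nat \<Rightarrow> 'a \<times> real \<Rightarrow> 'a" where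
  "Bk_seq F2 0 = F2"
| "Bk_seq F2 (Suc k) = dr (\<lambda>x. (1 / snd x) *\<^sub>R Bk_seq F2 k x)"

end

theory Submission
  imports Defs
begin

definition vdf :: "(real \<Rightarrow> 'b::real_normed_vector) \<Rightarrow> real \<Rightarrow> 'b" where
  "vdf f = (\<lambda>t. vector_derivative f (at t))"

lemma has_vd_shift_iff:
  "((\<lambda>t. f (r + t)) has_vector_derivative D) (at 0) \<longleftrightarrow> (f has_vector_derivative D) (at r)"
proof
  assume "(f has_vector_derivative D) (at r)"
  then have "((f \<circ> (\<lambda>t. r + t)) has_vector_derivative (1 *\<^sub>R D)) (at 0)"
    by (intro vector_diff_chain_at) (auto intro!: derivative_eq_intros)
  then show "((\<lambda>t. f (r + t)) has_vector_derivative D) (at 0)" by (simp add: o_def)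
next
  assume a: "((\<lambda>t. f (r + t)) has_vector_derivative D) (at 0)"
  have "(((\<lambda>t. f (r + t)) \<circ> (\<lambda>s. s - r)) has_vector_derivative (1 *\<^sub>R D)) (at r)"
    by (intro vector_diff_chain_at) (auto intro!: derivative_eq_intros simp: a)
  then show "(f has_vector_derivative D) (at r)" by (simp add: o_def)
qed

lemma vd_shift: "vector_derivative (\<lambda>t. f (r + t)) (at 0) = vector_derivative f (at r)"
  unfolding vector_derivative_def using has_vd_shift_iff[of f r] by simp

lemma differentiable_vd_iff:
  fixes f :: "real \<Rightarrow> 'b::real_normed_vector"
  shows "f differentiable F \<longleftrightarrow> (\<exists>D. (f has_vector_derivative D) F)"
  using vector_derivative_works differentiableI_vector by blast

lemma diff_shift: fixes f :: "real \<Rightarrow> 'b::real_normed_vector" shows "(\<lambda>t. f (r + t)) differentiable (at 0) \<longleftrightarrow> f differentiable (at r)"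
  by (simp only: differentiable_vd_iff has_vd_shift_iff)

lemma dr_eq: "dr F (y, r) = vdf (\<lambda>t. F (y, t)) r"
  unfolding dr_def pd_def vdf_def
  using vd_shift[of "\<lambda>t. F (y, t)" r] by simp

lemma dr_diff: fixes F :: "'a::real_normed_vector \<times> real \<Rightarrow> 'b::real_normed_vector" shows "(\<lambda>t. F ((y, r) + t *\<^sub>R (0, 1))) differentiable (at 0) \<longleftrightarrow> (\<lambda>t. F (y, t)) differentiable (at r)"
  using diff_shift[of "\<lambda>t. F (y, t)" r] by simp

definition smooth_on :: "real set \<Rightarrow> (real \<Rightarrow> 'b::real_normed_vector) \<Rightarrow> bool" where
  "smooth_on I f \<longleftrightarrow> (\<forall>n. \<forall>t\<in>I. ((vdf ^^ n) f) differentiable (at t))"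

lemma funpow_vdf_Suc: "(vdf ^^ Suc n) f = vdf ((vdf ^^ n) f)"
  by simp

lemma funpow_vdf_Suc': "(vdf ^^ Suc n) f = (vdf ^^ n) (vdf f)"
  by (simp add: funpow_Suc_right del: funpow.simps)

lemma smooth_vdf: "smooth_on I f \<Longrightarrow> smooth_on I (vdf f)"
  unfolding smooth_on_def by (metis funpow_vdf_Suc')

lemma smooth_hasvd:
  assumes "smooth_on I f" "t \<in> I"
  shows "((vdf ^^ n) f has_vector_derivative (vdf ^^ Suc n) f t) (at t)"
  using assms unfolding smooth_on_def funpow_vdf_Suc
  by (simp add: vdf_def vector_derivative_works[symmetric])

lemma smooth_isCont:
  assumes "smooth_on I f" "t \<in> I"
  shows "isCont ((vdf ^^ n) f) t"
  using assms unfolding smooth_on_def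
  by (simp add: differentiable_imp_continuous_within)

lemma smooth_cont_on:
  assumes "smooth_on I f"
  shows "continuous_on I ((vdf ^^ n) f)"
  using smooth_isCont[OF assms] by (simp add: continuous_at_imp_continuous_on)

lemma even_vdf_odd:
  fixes f :: "real \<Rightarrow> 'b::real_normed_vector"
  assumes I: "open I" "t \<in> I" "-t \<in> I" and ev: "\<forall>s\<in>I. -s \<in> I \<and> f (-s) = f s"
    and d: "f differentiable (at t)"
  shows "vdf f (-t) = - vdf f t"
proof -
  let ?D = "vdf f t"
  have fD: "(f has_vector_derivative ?D) (at t)"
    using d by (simp add: vdf_def vector_derivative_works[symmetric])
  have "((f \<circ> uminus) has_vector_derivative ((-1) *\<^sub>R ?D)) (at (-t))"
    by (rule vector_diff_chain_at) (auto intro!: derivative_eq_intros simp: fD)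
  then have "((\<lambda>s. f (-s)) has_vector_derivative (- ?D)) (at (-t))"
    by (simp add: o_def)
  then have "(f has_vector_derivative (- ?D)) (at (-t))"
    by (rule has_vector_derivative_transform_within_open[OF _ I(1) I(3)]) (use ev in auto)
  then show ?thesis by (simp add: vdf_def vector_derivative_at)
qed

lemma mult_in_I:
  fixes d s x :: real
  assumes "x \<in> {-d<..<d}" "s \<in> {0..1}"
  shows "s * x \<in> {-d<..<d}"
proof -
  have "\<bar>s * x\<bar> \<le> \<bar>x\<bar>" using assms by (auto simp: abs_mult intro: mult_left_le_one_le)
  then show ?thesis using assms by auto
qed

lemma leibniz_step:
  fixes h :: "real \<Rightarrow> 'b::euclidean_space"
  assumes I: "I = {-d<..<d}" and sm: "smooth_on I h" and r: "r \<in> I"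
  shows "((\<lambda>r. integral {0..1} (\<lambda>s. s ^ n *\<^sub>R (vdf ^^ Suc n) h (s * r))) has_vector_derivative
           integral {0..1} (\<lambda>s. s ^ Suc n *\<^sub>R (vdf ^^ Suc (Suc n)) h (s * r))) (at r)"
proof -
  have cI: "\<And>m. continuous_on I ((vdf ^^ m) h)" using smooth_cont_on[OF sm] .
  have inI: "\<And>x s. x \<in> I \<Longrightarrow> s \<in> {0..1} \<Longrightarrow> s * x \<in> I" using mult_in_I I by blast
  have "((\<lambda>r. integral (cbox 0 1) (\<lambda>s. s ^ n *\<^sub>R (vdf ^^ Suc n) h (s * r))) has_vector_derivative
           integral (cbox 0 1) (\<lambda>s. s ^ Suc n *\<^sub>R (vdf ^^ Suc (Suc n)) h (s * r))) (at r within I)"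
  proof (rule leibniz_rule_vector_derivative[where fx="\<lambda>r s. s ^ Suc n *\<^sub>R (vdf ^^ Suc (Suc n)) h (s * r)"])
    fix x s :: real assume x: "x \<in> I" and s: "s \<in> cbox 0 1"
    have sx: "s * x \<in> I" using inI x s by simp
    have h1: "((vdf ^^ Suc n) h has_vector_derivative (vdf ^^ Suc (Suc n)) h (s * x)) (at (s * x))"
      using smooth_hasvd[OF sm sx] .
    have "(((vdf ^^ Suc n) h \<circ> (\<lambda>x. s * x)) has_vector_derivative (s *\<^sub>R (vdf ^^ Suc (Suc n)) h (s * x))) (at x)"
      by (rule vector_diff_chain_at[where f="\<lambda>x. s * x", OF _ h1]) (auto intro!: derivative_eq_intros)
    then have "((\<lambda>x. s ^ n *\<^sub>R ((vdf ^^ Suc n) h \<circ> (\<lambda>x. s * x)) x) has_vector_derivative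
                 s ^ n *\<^sub>R (s *\<^sub>R (vdf ^^ Suc (Suc n)) h (s * x))) (at x)"
      by (rule bounded_linear.has_vector_derivative[OF bounded_linear_scaleR_right])
    then show "((\<lambda>x. s ^ n *\<^sub>R (vdf ^^ Suc n) h (s * x)) has_vector_derivative
                 s ^ Suc n *\<^sub>R (vdf ^^ Suc (Suc n)) h (s * x)) (at x within I)"
      by (auto simp: o_def mult.commute intro: has_vector_derivative_at_within)
  next
    fix x assume x: "x \<in> I"
    have "continuous_on {0..1} (\<lambda>s. (vdf ^^ Suc n) h (s * x))"
      by (rule continuous_on_compose2[OF cI[of "Suc n"]]) (auto intro!: inI[OF x] continuous_on_mult_right continuous_on_id)
    then have "continuous_on {0..1} (\<lambda>s. s ^ n *\<^sub>R (vdf ^^ Suc n) h (s * x))"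
      by (intro continuous_intros)
    then show "(\<lambda>s. s ^ n *\<^sub>R (vdf ^^ Suc n) h (s * x)) integrable_on cbox 0 1"
      by (simp add: integrable_continuous_real)
  next
    show "continuous_on (I \<times> cbox 0 1) (\<lambda>(x, s). s ^ Suc n *\<^sub>R (vdf ^^ Suc (Suc n)) h (s * x))"
    proof -
      have "continuous_on (I \<times> cbox 0 1) (\<lambda>z. snd z ^ Suc n *\<^sub>R (vdf ^^ Suc (Suc n)) h (snd z * fst z))"
      proof -
        have "continuous_on (I \<times> cbox 0 1) (\<lambda>z. (vdf ^^ Suc (Suc n)) h (snd z * fst z))"
        proof (rule continuous_on_compose2[OF cI[of "Suc (Suc n)"]])
          show "(\<lambda>z. snd z * fst z) ` (I \<times> cbox 0 1) \<subseteq> I"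
            using inI by force
        qed (intro continuous_intros)
        then show ?thesis by (intro continuous_intros)
      qed
      then show ?thesis by (simp add: case_prod_beta del: funpow.simps)
    qed
  qed (use r I in \<open>simp_all add: convex_real_interval\<close>)
  moreover have "at r within I = at r" by (rule at_within_open[OF r]) (simp add: I)
  ultimately show ?thesis by (simp only: box_real(2))
qed

lemma odd_div_smooth:
  fixes h :: "real \<Rightarrow> 'b::euclidean_space"
  assumes I: "I = {-d<..<d}" and d: "0 < d" and sm: "smooth_on I h" and odd: "\<forall>t\<in>I. h (-t) = - h t"
  shows "\<exists>H. smooth_on I H \<and> (\<forall>t\<in>I. H (-t) = H t) \<and> (\<forall>t\<in>I. t \<noteq> 0 \<longrightarrow> H t = (1/t) *\<^sub>R h t)"
proof -
  define H where "H = (\<lambda>r. integral {0..1} (\<lambda>s. s ^ 0 *\<^sub>R (vdf ^^ Suc 0) h (s * r)))"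
  have oI: "open I" using I by simp
  have inI: "\<And>x s. x \<in> I \<Longrightarrow> s \<in> {0..1} \<Longrightarrow> s * x \<in> I" using mult_in_I I by blast
  have der: "\<forall>r\<in>I. (vdf ^^ n) H r = integral {0..1} (\<lambda>s. s ^ n *\<^sub>R (vdf ^^ Suc n) h (s * r))" for n
  proof (induction n)
    case 0
    then show ?case by (simp add: H_def)
  next
    case (Suc n)
    show ?case
    proof
      fix r assume r: "r \<in> I"
      have "(vdf ^^ Suc n) H r = vector_derivative ((vdf ^^ n) H) (at r)"
        by (simp add: vdf_def)
      also have "\<dots> = vector_derivative (\<lambda>r. integral {0..1} (\<lambda>s. s ^ n *\<^sub>R (vdf ^^ Suc n) h (s * r))) (at r)"
        by (rule vector_derivative_cong_eq) (use Suc oI r in \<open>auto simp: eventually_nhds\<close>)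
      also have "\<dots> = integral {0..1} (\<lambda>s. s ^ Suc n *\<^sub>R (vdf ^^ Suc (Suc n)) h (s * r))"
        by (rule vector_derivative_at[OF leibniz_step[OF I sm r]])
      finally show "(vdf ^^ Suc n) H r = integral {0..1} (\<lambda>s. s ^ Suc n *\<^sub>R (vdf ^^ Suc (Suc n)) h (s * r))" .
    qed
  qed
  have smH: "smooth_on I H"
    unfolding smooth_on_def
  proof (intro allI ballI)
    fix n r assume r: "r \<in> I"
    have "((vdf ^^ n) H has_vector_derivative integral {0..1} (\<lambda>s. s ^ Suc n *\<^sub>R (vdf ^^ Suc (Suc n)) h (s * r))) (at r)"
      by (rule has_vector_derivative_transform_within_open[OF leibniz_step[OF I sm r] oI r])
         (use der in auto)
    then show "(vdf ^^ n) H differentiable at r" by (rule differentiableI_vector)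
  qed
  have "0 \<in> I" using I d by simp
  with odd have "h (-0) = - h 0" by blast
  then have h0: "h 0 = 0" by (simp add: eq_neg_iff_add_eq_0 scaleR_2[symmetric])
  have Hdiv: "H t = (1/t) *\<^sub>R h t" if t: "t \<in> I" "t \<noteq> 0" for t
  proof -
    have "((\<lambda>s. t *\<^sub>R vdf h (s * t)) has_integral (h (1 * t) - h (0 * t))) {0..1}"
    proof (rule fundamental_theorem_of_calculus)
      fix s :: real assume s: "s \<in> {0..1}"
      have st: "s * t \<in> I" using inI[OF t(1) s] by (simp add: mult.commute)
      have h1: "(h has_vector_derivative vdf h (s * t)) (at (s * t))"
        using smooth_hasvd[OF sm st, of 0] by simp
      have "((h \<circ> (\<lambda>s. s * t)) has_vector_derivative (t *\<^sub>R vdf h (s * t))) (at s)"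
        by (rule vector_diff_chain_at[where f="\<lambda>s. s * t", OF _ h1]) (auto intro!: derivative_eq_intros)
      then show "((\<lambda>s. h (s * t)) has_vector_derivative t *\<^sub>R vdf h (s * t)) (at s within {0..1})"
        by (simp add: o_def has_vector_derivative_at_within)
    qed simp
    then have "((\<lambda>s. t *\<^sub>R vdf h (s * t)) has_integral h t) {0..1}"
      using h0 by simp
    then have "integral {0..1} (\<lambda>s. t *\<^sub>R vdf h (s * t)) = h t"
      by (rule integral_unique)
    then have "t *\<^sub>R H t = h t" by (simp add: H_def)
    then have "(1/t) *\<^sub>R (t *\<^sub>R H t) = (1/t) *\<^sub>R h t" by simp
    then show ?thesis using t by simp
  qed
  have evH: "\<forall>t\<in>I. H (-t) = H t"
  proof
    fix t assume t: "t \<in> I"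
    show "H (-t) = H t"
    proof (cases "t = 0")
      case False
      have "-t \<in> I" using t I by auto
      then show ?thesis using Hdiv[OF t False] Hdiv[of "-t"] False odd t by simp
    qed simp
  qed
  show ?thesis using smH evH Hdiv by blast
qed

primrec ak :: "(real \<Rightarrow> 'b::real_normed_vector) \<Rightarrow> nat \<Rightarrow> real \<Rightarrow> 'b" where
  "ak g 0 = g"
| "ak g (Suc k) = (\<lambda>r. (1 / r) *\<^sub>R vdf (ak g k) r)"

primrec bk :: "(real \<Rightarrow> 'b::real_normed_vector) \<Rightarrow> nat \<Rightarrow> real \<Rightarrow> 'b" where
  "bk h 0 = h"
| "bk h (Suc k) = vdf (\<lambda>r. (1 / r) *\<^sub>R bk h k r)"

lemma vdf_cong_pos:
  assumes "I = {-d<..<d}" "r \<in> I" "r > 0" "\<And>t. t \<in> I \<Longrightarrow> t > 0 \<Longrightarrow> f t = g t"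
  shows "vdf f r = vdf g r"
  unfolding vdf_def
proof (rule vector_derivative_cong_eq)
  have "open (I \<inter> {0<..})" using assms(1) by auto
  moreover have "r \<in> I \<inter> {0<..}" using assms by auto
  ultimately show "\<forall>\<^sub>F x in nhds r. x \<in> UNIV \<longrightarrow> f x = g x"
    unfolding eventually_nhds using assms(4) by blast
qed auto

lemma ak_ext:
  fixes g :: "real \<Rightarrow> 'b::euclidean_space"
  assumes I: "I = {-d<..<d}" and d: "0 < d" and sm: "smooth_on I g" and ev: "\<forall>t\<in>I. g (-t) = g t"
  shows "\<exists>E. smooth_on I E \<and> (\<forall>t\<in>I. E (-t) = E t) \<and> (\<forall>r\<in>I. r > 0 \<longrightarrow> ak g k r = E r)"
proof (induction k)
  case 0
  then show ?case using sm ev by auto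
next
  case (Suc k)
  then obtain E where E: "smooth_on I E" "\<forall>t\<in>I. E (-t) = E t" "\<forall>r\<in>I. r > 0 \<longrightarrow> ak g k r = E r"
    by blast
  have oddE: "\<forall>t\<in>I. vdf E (-t) = - vdf E t"
  proof
    fix t assume t: "t \<in> I"
    have dd: "E differentiable at t" using E(1) t unfolding smooth_on_def by (metis funpow_0)
    show "vdf E (-t) = - vdf E t"
      by (rule even_vdf_odd[of I t E]) (use t I E(2) dd in auto)
  qed
  obtain H where H: "smooth_on I H" "\<forall>t\<in>I. H (-t) = H t" "\<forall>t\<in>I. t \<noteq> 0 \<longrightarrow> H t = (1/t) *\<^sub>R vdf E t"
    using odd_div_smooth[OF I d smooth_vdf[OF E(1)] oddE] by blast
  have "\<forall>r\<in>I. r > 0 \<longrightarrow> ak g (Suc k) r = H r"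
  proof (intro ballI impI)
    fix r assume r: "r \<in> I" "r > 0"
    have "vdf (ak g k) r = vdf E r" by (rule vdf_cong_pos[OF I r]) (use E(3) in auto)
    then show "ak g (Suc k) r = H r" using H(3) r by simp
  qed
  then show ?case using H by blast
qed

lemma bk_ext:
  fixes h :: "real \<Rightarrow> 'b::euclidean_space"
  assumes I: "I = {-d<..<d}" and d: "0 < d" and sm: "smooth_on I h" and odd: "\<forall>t\<in>I. h (-t) = - h t"
  shows "\<exists>Ob. smooth_on I Ob \<and> (\<forall>t\<in>I. Ob (-t) = - Ob t) \<and> (\<forall>r\<in>I. r > 0 \<longrightarrow> bk h k r = Ob r)"
proof (induction k)
  case 0
  then show ?case using sm odd by auto
next
  case (Suc k)
  then obtain Ob where Ob: "smooth_on I Ob" "\<forall>t\<in>I. Ob (-t) = - Ob t" "\<forall>r\<in>I. r > 0 \<longrightarrow> bk h k r = Ob r"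
    by blast
  obtain H where H: "smooth_on I H" "\<forall>t\<in>I. H (-t) = H t" "\<forall>t\<in>I. t \<noteq> 0 \<longrightarrow> H t = (1/t) *\<^sub>R Ob t"
    using odd_div_smooth[OF I d Ob(1) Ob(2)] by blast
  have oddH: "\<forall>t\<in>I. vdf H (-t) = - vdf H t"
  proof
    fix t assume t: "t \<in> I"
    have dd: "H differentiable at t" using H(1) t unfolding smooth_on_def by (metis funpow_0)
    show "vdf H (-t) = - vdf H t"
      by (rule even_vdf_odd[of I t H]) (use t I H(2) dd in auto)
  qed
  have "\<forall>r\<in>I. r > 0 \<longrightarrow> bk h (Suc k) r = vdf H r"
  proof (intro ballI impI)
    fix r assume r: "r \<in> I" "r > 0"
    show "bk h (Suc k) r = vdf H r"
      unfolding bk.simps by (rule vdf_cong_pos[OF I r]) (use Ob(3) H(3) in auto)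
  qed
  then show ?case using smooth_vdf[OF H(1)] oddH by blast
qed

lemma has_pd:
  "(\<lambda>t. F (x + t *\<^sub>R u)) differentiable (at 0) \<Longrightarrow>
   ((\<lambda>t. F (x + t *\<^sub>R u)) has_vector_derivative pd F u x) (at 0)"
  unfolding pd_def by (simp add: vector_derivative_works[symmetric])

lemma pd_add:
  assumes "(\<lambda>t. F (x + t *\<^sub>R u)) differentiable (at 0)" "(\<lambda>t. G (x + t *\<^sub>R u)) differentiable (at 0)"
  shows "pd (\<lambda>z. F z + G z) u x = pd F u x + pd G u x"
  "(\<lambda>t. F (x + t *\<^sub>R u) + G (x + t *\<^sub>R u)) differentiable (at 0)"
proof -
  have "((\<lambda>t. F (x + t *\<^sub>R u) + G (x + t *\<^sub>R u)) has_vector_derivative pd F u x + pd G u x) (at 0)"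
    by (intro has_vector_derivative_add has_pd assms)
  then show "pd (\<lambda>z. F z + G z) u x = pd F u x + pd G u x"
    "(\<lambda>t. F (x + t *\<^sub>R u) + G (x + t *\<^sub>R u)) differentiable (at 0)"
    unfolding pd_def by (auto simp: vector_derivative_at intro: differentiableI_vector)
qed

lemma pd_lin:
  assumes L: "bounded_linear L" and "(\<lambda>t. F (x + t *\<^sub>R u)) differentiable (at 0)"
  shows "pd (\<lambda>z. L (F z)) u x = L (pd F u x)"
  "(\<lambda>t. L (F (x + t *\<^sub>R u))) differentiable (at 0)"
proof -
  have "((\<lambda>t. L (F (x + t *\<^sub>R u))) has_vector_derivative L (pd F u x)) (at 0)"
    by (rule bounded_linear.has_vector_derivative[OF L has_pd[OF assms(2)]])
  then show "pd (\<lambda>z. L (F z)) u x = L (pd F u x)"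
    "(\<lambda>t. L (F (x + t *\<^sub>R u))) differentiable (at 0)"
    unfolding pd_def by (auto simp: vector_derivative_at intro: differentiableI_vector)
qed

lemma iter_pd_append: "iter_pd (us @ [u]) F = iter_pd us (pd F u)"
  by (induction us) auto

definition Ck :: "('a::real_normed_vector \<times> real) set \<Rightarrow> ('a \<times> real) set \<Rightarrow> nat \<Rightarrow> ('a \<times> real \<Rightarrow> 'b::real_normed_vector) \<Rightarrow> bool" where
  "Ck U S n F \<longleftrightarrow> (\<forall>vs. length vs \<le> n \<longrightarrow> set vs \<subseteq> U \<longrightarrow> C1_on U S (iter_pd vs F))"

lemma Cinf_Ck: "Cinf_on U S F \<longleftrightarrow> (\<forall>n. Ck U S n F)"
  unfolding Cinf_on_def Ck_def by (metis order_refl)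

lemma Ck_mono: "Ck U S n F \<Longrightarrow> m \<le> n \<Longrightarrow> Ck U S m F"
  unfolding Ck_def by auto

lemma Ck_C1: "Ck U S n F \<Longrightarrow> C1_on U S F"
  unfolding Ck_def by (drule spec[of _ "[]"]) simp

lemma Ck_pd: "Ck U S (Suc n) F \<Longrightarrow> u \<in> U \<Longrightarrow> Ck U S n (pd F u)"
  unfolding Ck_def
proof (intro allI impI)
  fix vs :: "('a \<times> real) list"
  assume "\<forall>vs. length vs \<le> Suc n \<longrightarrow> set vs \<subseteq> U \<longrightarrow> C1_on U S (iter_pd vs F)" "u \<in> U"
    "length vs \<le> n" "set vs \<subseteq> U"
  then show "C1_on U S (iter_pd vs (pd F u))"
    by (metis iter_pd_append[of vs u F] length_append_singleton not_less_eq_eq set_append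
        Un_subset_iff empty_subsetI insert_subset list.set(1) list.set(2))
qed

lemma C1_onD:
  assumes "C1_on U S F" "u \<in> U" "x \<in> S"
  shows "(\<lambda>t. F (x + t *\<^sub>R u)) differentiable (at 0)"
  using assms unfolding C1_on_def by auto

lemma C1_onC:
  assumes "C1_on U S F" "u \<in> U"
  shows "continuous_on S (pd F u)" "continuous_on S F"
  using assms unfolding C1_on_def by auto

locale dom =
  fixes W :: "('a::euclidean_space \<times> real) set" and U :: "('a \<times> real) set" and S :: "('a \<times> real) set"
  assumes subW: "subspace W" and UW: "U \<subseteq> W" and Sopen: "openin (top_of_set W) S"
begin

lemma SW: "S \<subseteq> W" using Sopen by (simp add: openin_euclidean_subtopology_iff)

lemma plane:
  assumes x: "x \<in> S" and u: "u \<in> W" and w: "w \<in> W"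
  shows "\<exists>e>0. \<forall>s t. \<bar>s\<bar> < e \<longrightarrow> \<bar>t\<bar> < e \<longrightarrow> x + s *\<^sub>R u + t *\<^sub>R w \<in> S"
proof -
  obtain e where e: "e > 0" "\<forall>x'\<in>W. dist x' x < e \<longrightarrow> x' \<in> S"
    using Sopen x by (auto simp: openin_euclidean_subtopology_iff)
  define e' where "e' = e / (norm u + norm w + 1)"
  have pos: "norm u + norm w + 1 > 0" using norm_ge_zero[of u] norm_ge_zero[of w] by linarith
  have e': "e' > 0" using e pos by (simp add: e'_def)
  have "x + s *\<^sub>R u + t *\<^sub>R w \<in> S" if st: "\<bar>s\<bar> < e'" "\<bar>t\<bar> < e'" for s t
  proof -
    have xW: "x \<in> W" using x SW by auto
    have inW: "x + s *\<^sub>R u + t *\<^sub>R w \<in> W"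
      using subW xW u w by (simp add: subspace_add subspace_scale)
    have "dist (x + s *\<^sub>R u + t *\<^sub>R w) x = norm (s *\<^sub>R u + t *\<^sub>R w)"
      by (simp add: dist_norm)
    also have "\<dots> \<le> \<bar>s\<bar> * norm u + \<bar>t\<bar> * norm w"
      by (metis norm_scaleR norm_triangle_ineq)
    also have "\<dots> \<le> e' * norm u + e' * norm w"
      using st by (intro add_mono mult_right_mono) auto
    also have "\<dots> < e' * (norm u + norm w + 1)"
      using e' by (simp add: algebra_simps)
    also have "\<dots> = e" using e pos by (simp add: e'_def)
    finally show ?thesis using e inW by auto
  qed
  then show ?thesis using e' by blast
qed

lemma line_ev:
  assumes x: "x \<in> S" and u: "u \<in> W"
  shows "\<forall>\<^sub>F t in nhds 0. x + t *\<^sub>R u \<in> S"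
proof -
  obtain e where e: "e > 0" "\<forall>s t. \<bar>s\<bar> < e \<longrightarrow> \<bar>t\<bar> < e \<longrightarrow> x + s *\<^sub>R u + t *\<^sub>R u \<in> S"
    using plane[OF x u u] by blast
  show ?thesis unfolding eventually_nhds_metric
    using e by (intro exI[of _ e]) (auto simp: dist_real_def dest: spec[of _ 0])
qed

lemma pd_cong:
  assumes x: "x \<in> S" and u: "u \<in> W" and eq: "\<And>z. z \<in> S \<Longrightarrow> F z = G z"
  shows "pd F u x = pd G u x"
  unfolding pd_def
proof (rule vector_derivative_cong_eq)
  show "\<forall>\<^sub>F t in nhds 0. t \<in> UNIV \<longrightarrow> F (x + t *\<^sub>R u) = G (x + t *\<^sub>R u)"
    using line_ev[OF x u] by (rule eventually_mono) (simp add: eq)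
qed auto

lemma diff_cong:
  assumes x: "x \<in> S" and u: "u \<in> W" and eq: "\<And>z. z \<in> S \<Longrightarrow> F z = G z"
    and d: "(\<lambda>t. F (x + t *\<^sub>R u)) differentiable (at 0)"
  shows "(\<lambda>t. G (x + t *\<^sub>R u)) differentiable (at 0)"
proof -
  have ev: "\<forall>\<^sub>F t in nhds 0. t \<in> UNIV \<longrightarrow> F (x + t *\<^sub>R u) = G (x + t *\<^sub>R u)"
    using line_ev[OF x u] by (rule eventually_mono) (simp add: eq)
  have "((\<lambda>t. G (x + t *\<^sub>R u)) has_vector_derivative pd F u x) (at 0)"
    using has_pd[OF d] has_vector_derivative_cong_ev[OF ev] x eq by simp
  then show ?thesis by (rule differentiableI_vector)
qed

lemma C1_cong:
  assumes eq: "\<And>z. z \<in> S \<Longrightarrow> F z = G z" and C: "C1_on U S F"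
  shows "C1_on U S G"
  unfolding C1_on_def
proof (intro conjI ballI)
  have "continuous_on S F = continuous_on S G" by (rule continuous_on_cong) (auto simp: eq)
  then show "continuous_on S G" using C1_onC(2)[OF C] C unfolding C1_on_def by simp
next
  fix u x assume u: "u \<in> U" and x: "x \<in> S"
  show "(\<lambda>t. G (x + t *\<^sub>R u)) differentiable (at 0)"
    by (rule diff_cong[OF x _ eq C1_onD(1)[OF C u x]]) (use u UW in auto)
next
  fix u assume u: "u \<in> U"
  have uW: "u \<in> W" using u UW by auto
  have "pd F u z = pd G u z" if "z \<in> S" for z by (rule pd_cong[OF that uW eq])
  then have "continuous_on S (pd F u) = continuous_on S (pd G u)" by (intro continuous_on_cong) auto
  then show "continuous_on S (pd G u)" using C1_onC(1)[OF C u] by simp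
qed

lemma iter_cong:
  assumes eq: "\<And>z. z \<in> S \<Longrightarrow> F z = G z" and us: "set us \<subseteq> W" and x: "x \<in> S"
  shows "iter_pd us F x = iter_pd us G x"
  using us x
proof (induction us arbitrary: x)
  case Nil
  then show ?case using eq by simp
next
  case (Cons a us)
  then show ?case using pd_cong[of x a "iter_pd us F" "iter_pd us G"] by simp
qed

lemma C1_add:
  assumes "C1_on U S F" "C1_on U S G"
  shows "C1_on U S (\<lambda>z. F z + G z)"
  unfolding C1_on_def
proof (intro conjI ballI)
  have "continuous_on S F" "continuous_on S G" using assms by (simp_all add: C1_on_def)
  then show "continuous_on S (\<lambda>z. F z + G z)" by (rule continuous_on_add)
next
  fix u x assume u: "u \<in> U" and x: "x \<in> S"
  show "(\<lambda>t. F (x + t *\<^sub>R u) + G (x + t *\<^sub>R u)) differentiable (at 0)"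
    by (rule pd_add(2)[OF C1_onD(1)[OF assms(1) u x] C1_onD(1)[OF assms(2) u x]])
next
  fix u assume u: "u \<in> U"
  have "\<And>z. z \<in> S \<Longrightarrow> pd F u z + pd G u z = pd (\<lambda>z. F z + G z) u z"
    using pd_add(1)[OF C1_onD(1)[OF assms(1) u] C1_onD(1)[OF assms(2) u]] by simp
  moreover have "continuous_on S (\<lambda>z. pd F u z + pd G u z)"
    by (rule continuous_on_add[OF C1_onC(1)[OF assms(1) u] C1_onC(1)[OF assms(2) u]])
  ultimately show "continuous_on S (pd (\<lambda>z. F z + G z) u)"
    using continuous_on_cong[of S S "\<lambda>z. pd F u z + pd G u z" "pd (\<lambda>z. F z + G z) u"] by simp
qed

lemma C1_lin:
  assumes L: "bounded_linear L" and C: "C1_on U S F"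
  shows "C1_on U S (\<lambda>z. L (F z))"
  unfolding C1_on_def
proof (intro conjI ballI)
  have "continuous_on S F" using C by (simp add: C1_on_def)
  then show "continuous_on S (\<lambda>z. L (F z))"
    by (rule continuous_on_compose2[OF linear_continuous_on[OF L]]) auto
next
  fix u x assume u: "u \<in> U" and x: "x \<in> S"
  show "(\<lambda>t. L (F (x + t *\<^sub>R u))) differentiable (at 0)"
    by (rule pd_lin(2)[OF L C1_onD(1)[OF C u x]])
next
  fix u assume u: "u \<in> U"
  have "\<And>z. z \<in> S \<Longrightarrow> L (pd F u z) = pd (\<lambda>z. L (F z)) u z"
    using pd_lin(1)[OF L C1_onD(1)[OF C u]] by simp
  moreover have "continuous_on S (\<lambda>z. L (pd F u z))"
    using C1_onC(1)[OF C u] by (rule continuous_on_compose2[OF linear_continuous_on[OF L]]) auto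
  ultimately show "continuous_on S (pd (\<lambda>z. L (F z)) u)"
    using continuous_on_cong[of S S "\<lambda>z. L (pd F u z)" "pd (\<lambda>z. L (F z)) u"] by simp
qed

lemma iter_add:
  assumes F: "Ck U S n F" and G: "Ck U S n G"
  shows "length vs \<le> n \<Longrightarrow> set vs \<subseteq> U \<Longrightarrow> x \<in> S \<Longrightarrow>
    iter_pd vs (\<lambda>z. F z + G z) x = iter_pd vs F x + iter_pd vs G x"
proof (induction vs arbitrary: x)
  case Nil
  then show ?case by simp
next
  case (Cons a vs)
  have a: "a \<in> U" "a \<in> W" using Cons UW by auto
  have CF: "C1_on U S (iter_pd vs F)" and CG: "C1_on U S (iter_pd vs G)"
    using F G Cons.prems unfolding Ck_def by auto
  have "iter_pd (a # vs) (\<lambda>z. F z + G z) x = pd (\<lambda>z. iter_pd vs F z + iter_pd vs G z) a x"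
    using pd_cong[OF Cons.prems(3) a(2), of "iter_pd vs (\<lambda>z. F z + G z)"] Cons by simp
  also have "\<dots> = iter_pd (a # vs) F x + iter_pd (a # vs) G x"
    using pd_add(1)[OF C1_onD(1)[OF CF a(1) Cons.prems(3)] C1_onD(1)[OF CG a(1) Cons.prems(3)]] by simp
  finally show ?case .
qed

lemma Ck_add:
  assumes F: "Ck U S n F" and G: "Ck U S n G"
  shows "Ck U S n (\<lambda>z. F z + G z)"
  unfolding Ck_def
proof (intro allI impI)
  fix vs :: "('a \<times> real) list" assume vs: "length vs \<le> n" "set vs \<subseteq> U"
  have "C1_on U S (\<lambda>z. iter_pd vs F z + iter_pd vs G z)"
    using C1_add F G vs unfolding Ck_def by auto
  then show "C1_on U S (iter_pd vs (\<lambda>z. F z + G z))"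
    by (rule C1_cong[rotated]) (use iter_add[OF F G vs] in auto)
qed

lemma iter_lin:
  assumes L: "bounded_linear L" and F: "Ck U S n F"
  shows "length vs \<le> n \<Longrightarrow> set vs \<subseteq> U \<Longrightarrow> x \<in> S \<Longrightarrow>
    iter_pd vs (\<lambda>z. L (F z)) x = L (iter_pd vs F x)"
proof (induction vs arbitrary: x)
  case Nil
  then show ?case by simp
next
  case (Cons a vs)
  have a: "a \<in> U" "a \<in> W" using Cons UW by auto
  have CF: "C1_on U S (iter_pd vs F)"
    using F Cons.prems unfolding Ck_def by auto
  have "iter_pd (a # vs) (\<lambda>z. L (F z)) x = pd (\<lambda>z. L (iter_pd vs F z)) a x"
    using pd_cong[OF Cons.prems(3) a(2), of "iter_pd vs (\<lambda>z. L (F z))"] Cons by simp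
  also have "\<dots> = L (iter_pd (a # vs) F x)"
    using pd_lin(1)[OF L C1_onD(1)[OF CF a(1) Cons.prems(3)]] by simp
  finally show ?case .
qed

lemma Ck_lin:
  assumes L: "bounded_linear L" and F: "Ck U S n F"
  shows "Ck U S n (\<lambda>z. L (F z))"
  unfolding Ck_def
proof (intro allI impI)
  fix vs :: "('a \<times> real) list" assume vs: "length vs \<le> n" "set vs \<subseteq> U"
  have "C1_on U S (\<lambda>z. L (iter_pd vs F z))"
    using C1_lin[OF L] F vs unfolding Ck_def by auto
  then show "C1_on U S (iter_pd vs (\<lambda>z. L (F z)))"
    by (rule C1_cong[rotated]) (use iter_lin[OF L F vs] in auto)
qed

end

lemma recip_deriv:
  fixes r a :: real
  assumes r: "r > 0"
  shows "((\<lambda>t. (1 / (r + t * a)) ^ j) has_real_derivative (- (real j * a * (1 / r) ^ Suc j))) (at 0)"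
proof -
  have g: "((\<lambda>t. 1 / (r + t * a)) has_real_derivative (- a / r ^ 2)) (at 0)"
    using r by (auto intro!: derivative_eq_intros simp: field_simps power2_eq_square)
  have "((\<lambda>t. (1 / (r + t * a)) ^ j) has_real_derivative
          real j * ((- a / r ^ 2) * (1 / (r + 0 * a)) ^ (j - Suc 0))) (at 0)"
    by (rule DERIV_power[OF g])
  moreover have "real j * ((- a / r ^ 2) * (1 / (r + 0 * a)) ^ (j - Suc 0)) = - (real j * a * (1 / r) ^ Suc j)"
  proof (cases j)
    case (Suc i)
    then show ?thesis using r by (simp add: field_simps power2_eq_square)
  qed simp
  ultimately show ?thesis by simp
qed


lemma pd_recip:
  fixes G :: "'a::real_normed_vector \<times> real \<Rightarrow> 'b::real_normed_vector"
  assumes r: "snd x > 0" and d: "(\<lambda>t. G (x + t *\<^sub>R u)) differentiable (at 0)"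
  shows "((\<lambda>t. (1 / snd (x + t *\<^sub>R u)) ^ j *\<^sub>R G (x + t *\<^sub>R u)) has_vector_derivative
          ((1 / snd x) ^ j *\<^sub>R pd G u x + (- (real j * snd u * (1 / snd x) ^ Suc j)) *\<^sub>R G x)) (at 0)"
proof -
  have f: "((\<lambda>t. (1 / (snd x + t * snd u)) ^ j) has_real_derivative (- (real j * snd u * (1 / snd x) ^ Suc j))) (at 0)"
    by (rule recip_deriv[OF r])
  have "((\<lambda>t. (1 / (snd x + t * snd u)) ^ j *\<^sub>R G (x + t *\<^sub>R u)) has_vector_derivative
         ((1 / (snd x + 0 * snd u)) ^ j *\<^sub>R pd G u x + (- (real j * snd u * (1 / snd x) ^ Suc j)) *\<^sub>R G (x + 0 *\<^sub>R u))) (at 0)"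
    by (rule has_vector_derivative_scaleR[OF f has_pd[OF d]])
  then show ?thesis by simp
qed

lemma pd_recip_eq:
  fixes G :: "'a::real_normed_vector \<times> real \<Rightarrow> 'b::real_normed_vector"
  assumes r: "snd x > 0" and d: "(\<lambda>t. G (x + t *\<^sub>R u)) differentiable (at 0)"
  shows "pd (\<lambda>z. (1 / snd z) ^ j *\<^sub>R G z) u x =
          (1 / snd x) ^ j *\<^sub>R pd G u x + (- (real j * snd u * (1 / snd x) ^ Suc j)) *\<^sub>R G x"
  unfolding pd_def by (rule vector_derivative_at[OF pd_recip[OF r d, unfolded pd_def]])

context dom
begin

lemma C1_recip:
  assumes Spos: "\<forall>x\<in>S. snd x > 0" and C: "C1_on U S G"
  shows "C1_on U S (\<lambda>x. (1 / snd x) ^ j *\<^sub>R G x)"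
  unfolding C1_on_def
proof (intro conjI ballI)
  have cG: "continuous_on S G" using C by (simp add: C1_on_def)
  have "continuous_on S (\<lambda>x. (1 / snd x) ^ j)" using Spos by (intro continuous_intros) auto
  then show "continuous_on S (\<lambda>x. (1 / snd x) ^ j *\<^sub>R G x)" using cG by (rule continuous_on_scaleR)
next
  fix u x assume u: "u \<in> U" and x: "x \<in> S"
  show "(\<lambda>t. (1 / snd (x + t *\<^sub>R u)) ^ j *\<^sub>R G (x + t *\<^sub>R u)) differentiable (at 0)"
    by (rule differentiableI_vector[OF pd_recip[OF _ C1_onD(1)[OF C u x]]]) (use Spos x in auto)
next
  fix u assume u: "u \<in> U"
  have eq: "(1 / snd z) ^ j *\<^sub>R pd G u z + (- (real j * snd u * (1 / snd z) ^ Suc j)) *\<^sub>R G z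
      = pd (\<lambda>x. (1 / snd x) ^ j *\<^sub>R G x) u z" if z: "z \<in> S" for z
    using pd_recip_eq[OF _ C1_onD(1)[OF C u z]] Spos z by simp
  have cG: "continuous_on S G" "continuous_on S (pd G u)" using C1_onC[OF C u] by auto
  have "continuous_on S (\<lambda>z. (1 / snd z) ^ j *\<^sub>R pd G u z + (- (real j * snd u * (1 / snd z) ^ Suc j)) *\<^sub>R G z)"
    using Spos cG by (intro continuous_intros) auto
  then show "continuous_on S (pd (\<lambda>x. (1 / snd x) ^ j *\<^sub>R G x) u)"
    by (rule continuous_on_eq) (use eq in auto)
qed

lemma Ck_recip:
  assumes Spos: "\<forall>x\<in>S. snd x > 0"
  shows "Ck U S n G \<Longrightarrow> Ck U S n (\<lambda>x. (1 / snd x) ^ j *\<^sub>R G x)"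
proof (induction n arbitrary: j G)
  case 0
  have "C1_on U S (\<lambda>x. (1 / snd x) ^ j *\<^sub>R G x)" using C1_recip[OF Spos Ck_C1[OF 0]] .
  then show ?case unfolding Ck_def by auto
next
  case (Suc n)
  show ?case unfolding Ck_def
  proof (intro allI impI)
    fix vs :: "('a \<times> real) list" assume vs: "length vs \<le> Suc n" "set vs \<subseteq> U"
    show "C1_on U S (iter_pd vs (\<lambda>x. (1 / snd x) ^ j *\<^sub>R G x))"
    proof (cases vs rule: rev_exhaust)
      case Nil
      then show ?thesis using C1_recip[OF Spos Ck_C1[OF Suc.prems]] by simp
    next
      case (snoc vs' u)
      have u: "u \<in> U" "u \<in> W" and vs': "length vs' \<le> n" "set vs' \<subseteq> U" "set vs' \<subseteq> W"
        using vs snoc UW by auto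
      define \<Phi> where "\<Phi> = (\<lambda>z. (1 / snd z) ^ j *\<^sub>R pd G u z + (1 / snd z) ^ Suc j *\<^sub>R ((- (real j * snd u)) *\<^sub>R G z))"
      have eqPhi: "pd (\<lambda>x. (1 / snd x) ^ j *\<^sub>R G x) u z = \<Phi> z" if "z \<in> S" for z
        using pd_recip_eq[OF _ C1_onD(1)[OF Ck_C1[OF Suc.prems] u(1) that]] Spos that by (simp add: \<Phi>_def)
      have cG: "Ck U S n G" using Ck_mono[OF Suc.prems] by simp
      have c1: "Ck U S n (\<lambda>z. (1 / snd z) ^ j *\<^sub>R pd G u z)"
        by (rule Suc.IH[OF Ck_pd[OF Suc.prems u(1)]])
      have c2: "Ck U S n (\<lambda>z. (1 / snd z) ^ Suc j *\<^sub>R ((- (real j * snd u)) *\<^sub>R G z))"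
        by (rule Suc.IH[OF Ck_lin[OF bounded_linear_scaleR_right cG]])
      have "Ck U S n \<Phi>" unfolding \<Phi>_def by (rule Ck_add[OF c1 c2])
      then have "C1_on U S (iter_pd vs' \<Phi>)" using vs' unfolding Ck_def by auto
      moreover have "iter_pd vs' \<Phi> z = iter_pd vs' (pd (\<lambda>x. (1 / snd x) ^ j *\<^sub>R G x) u) z" if "z \<in> S" for z
        by (rule iter_cong[OF _ vs'(3) that]) (simp add: eqPhi)
      ultimately have "C1_on U S (iter_pd vs' (pd (\<lambda>x. (1 / snd x) ^ j *\<^sub>R G x) u))"
        by (rule C1_cong[rotated])
      then show ?thesis using snoc by (simp add: iter_pd_append)
    qed
  qed
qed

end

lemma shift_chain:
  fixes G :: "'x::real_normed_vector \<Rightarrow> 'b::real_normed_vector"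
  assumes "((\<lambda>sg. G (y + sg *\<^sub>R u)) has_vector_derivative D) (at 0)"
  shows "((\<lambda>ta. G (y + (c * (ta - ta0)) *\<^sub>R u)) has_vector_derivative (c *\<^sub>R D)) (at ta0)"
proof -
  have "(((\<lambda>sg. G (y + sg *\<^sub>R u)) \<circ> (\<lambda>ta. c * (ta - ta0))) has_vector_derivative (c *\<^sub>R D)) (at ta0)"
    by (rule vector_diff_chain_at[where f="\<lambda>ta. c * (ta - ta0)"]) (auto intro!: derivative_eq_intros simp: assms)
  then show ?thesis by (simp add: o_def)
qed

lemma hasvd_from_quotient:
  fixes f J :: "real \<Rightarrow> 'b::real_normed_vector"
  assumes ev: "\<forall>\<^sub>F h in at 0. f h - f 0 = h *\<^sub>R J h" and lim: "(J \<longlongrightarrow> L) (at 0)"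
  shows "(f has_vector_derivative L) (at 0)"
proof -
  have "((\<lambda>h. J h - L) \<longlongrightarrow> 0) (at 0)" using tendsto_diff[OF lim tendsto_const[of L]] by simp
  then have "((\<lambda>h. norm (J h - L)) \<longlongrightarrow> 0) (at 0)" by (rule tendsto_norm_zero)
  moreover have "\<forall>\<^sub>F h in at 0. norm (J h - L) = norm (f (0 + h) - f 0 - h *\<^sub>R L) / norm h"
    using eventually_conj[OF ev eventually_neq_at_within[of 0 0 UNIV]]
  proof (rule eventually_mono)
    fix h :: real assume h: "f h - f 0 = h *\<^sub>R J h \<and> h \<noteq> 0"
    then have "f (0 + h) - f 0 - h *\<^sub>R L = h *\<^sub>R (J h - L)" by (simp add: algebra_simps)
    then show "norm (J h - L) = norm (f (0 + h) - f 0 - h *\<^sub>R L) / norm h" using h by simp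
  qed
  ultimately have "((\<lambda>h. norm (f (0 + h) - f 0 - h *\<^sub>R L) / norm h) \<longlongrightarrow> 0) (at 0)"
    by (rule Lim_transform_eventually)
  then show ?thesis unfolding has_vector_derivative_def has_derivative_at
    by (auto intro: bounded_linear_scaleR_left)
qed

lemma tin: "ta \<in> {0..1} \<Longrightarrow> \<bar>s\<bar> < e \<Longrightarrow> \<bar>ta * s\<bar> < (e::real)"
  by (auto simp: abs_mult intro: le_less_trans[OF mult_left_le_one_le])

lemma schwarz:
  fixes G P Q M :: "'x::real_normed_vector \<Rightarrow> 'b::euclidean_space"
  assumes e: "e > 0" and sq: "\<forall>s t. \<bar>s\<bar> < e \<longrightarrow> \<bar>t\<bar> < e \<longrightarrow> x + s *\<^sub>R u + t *\<^sub>R w \<in> S"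
   and P: "\<forall>y\<in>S. ((\<lambda>sg. G (y + sg *\<^sub>R u)) has_vector_derivative P y) (at 0)"
   and Q: "\<forall>y\<in>S. ((\<lambda>ta. G (y + ta *\<^sub>R w)) has_vector_derivative Q y) (at 0)"
   and M: "\<forall>y\<in>S. ((\<lambda>ta. P (y + ta *\<^sub>R w)) has_vector_derivative M y) (at 0)"
   and cP: "continuous_on S P" and cM: "continuous_on S M"
  shows "((\<lambda>s. Q (x + s *\<^sub>R u)) has_vector_derivative M x) (at 0)"
proof -
  define z where "z s t = x + s *\<^sub>R u + t *\<^sub>R w" for s t
  have zS: "\<bar>s\<bar> < e \<Longrightarrow> \<bar>t\<bar> < e \<Longrightarrow> z s t \<in> S" for s t using sq z_def by auto
  let ?I = "{-e<..<e}"
  have step1: "G (z s t) - G (z 0 t) = integral {0..1} (\<lambda>ta. s *\<^sub>R P (z (ta * s) t))"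
    if s: "\<bar>s\<bar> < e" and t: "\<bar>t\<bar> < e" for s t
  proof -
    have "((\<lambda>ta. s *\<^sub>R P (z (ta * s) t)) has_integral (G (z (1 * s) t) - G (z (0 * s) t))) {0..1}"
    proof (rule fundamental_theorem_of_calculus)
      fix ta :: real assume ta: "ta \<in> {0..1}"
      have y: "z (ta * s) t \<in> S" by (rule zS[OF tin[OF ta s] t])
      have "((\<lambda>sg. G (z (ta * s) t + (s * (sg - ta)) *\<^sub>R u)) has_vector_derivative (s *\<^sub>R P (z (ta * s) t))) (at ta)"
        by (rule shift_chain) (use P y in auto)
      moreover have "(\<lambda>sg. G (z (ta * s) t + (s * (sg - ta)) *\<^sub>R u)) = (\<lambda>sg. G (z (sg * s) t))"
        by (rule ext) (simp add: z_def algebra_simps)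
      ultimately show "((\<lambda>sg. G (z (sg * s) t)) has_vector_derivative s *\<^sub>R P (z (ta * s) t)) (at ta within {0..1})"
        by (auto intro: has_vector_derivative_at_within)
    qed simp
    then have "((\<lambda>ta. s *\<^sub>R P (z (ta * s) t)) has_integral (G (z s t) - G (z 0 t))) {0..1}" by simp
    then show ?thesis by (rule integral_unique[symmetric])
  qed
  have step2: "Q (z s 0) - Q (z 0 0) = integral {0..1} (\<lambda>ta. s *\<^sub>R M (z (ta * s) 0))"
    if s: "\<bar>s\<bar> < e" for s
  proof -
    have e0: "\<bar>0::real\<bar> < e" using e by simp
    have Lz: "((\<lambda>t. G (z s' t)) has_vector_derivative Q (z s' 0)) (at 0)" if s': "\<bar>s'\<bar> < e" for s'
    proof -
      have "(\<lambda>ta. G (z s' 0 + ta *\<^sub>R w)) = (\<lambda>t. G (z s' t))" by (rule ext) (simp add: z_def algebra_simps)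
      then show ?thesis using Q zS[OF s' e0] by metis
    qed
    have L: "((\<lambda>t. G (z s t) - G (z 0 t)) has_vector_derivative (Q (z s 0) - Q (z 0 0))) (at 0)"
      by (intro has_vector_derivative_diff Lz s e0)
    have "((\<lambda>t. integral (cbox 0 1) (\<lambda>ta. s *\<^sub>R P (z (ta * s) t))) has_vector_derivative
             integral (cbox 0 1) (\<lambda>ta. s *\<^sub>R M (z (ta * s) 0))) (at 0 within ?I)"
    proof (rule leibniz_rule_vector_derivative[where fx="\<lambda>t ta. s *\<^sub>R M (z (ta * s) t)"])
      fix t ta :: real assume t: "t \<in> ?I" and ta: "ta \<in> cbox 0 1"
      have y: "z (ta * s) t \<in> S" using zS[OF tin[OF _ s]] t ta by auto
      have "((\<lambda>sg. P (z (ta * s) t + (1 * (sg - t)) *\<^sub>R w)) has_vector_derivative (1 *\<^sub>R M (z (ta * s) t))) (at t)"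
        by (rule shift_chain) (use M y in auto)
      moreover have "(\<lambda>sg. P (z (ta * s) t + (1 * (sg - t)) *\<^sub>R w)) = (\<lambda>sg. P (z (ta * s) sg))"
        by (rule ext) (simp add: z_def algebra_simps)
      ultimately have "((\<lambda>sg. P (z (ta * s) sg)) has_vector_derivative M (z (ta * s) t)) (at t)" by simp
      then have "((\<lambda>sg. s *\<^sub>R P (z (ta * s) sg)) has_vector_derivative s *\<^sub>R M (z (ta * s) t)) (at t)"
        by (rule bounded_linear.has_vector_derivative[OF bounded_linear_scaleR_right])
      then show "((\<lambda>sg. s *\<^sub>R P (z (ta * s) sg)) has_vector_derivative s *\<^sub>R M (z (ta * s) t)) (at t within ?I)"
        by (rule has_vector_derivative_at_within)
    next
      fix t assume t: "t \<in> ?I"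
      have "continuous_on {0..1} (\<lambda>ta. P (z (ta * s) t))"
      proof (rule continuous_on_compose2[OF cP])
        show "continuous_on {0..1} (\<lambda>ta. z (ta * s) t)" unfolding z_def by (intro continuous_intros)
        show "(\<lambda>ta. z (ta * s) t) ` {0..1} \<subseteq> S" using zS[OF tin[OF _ s]] t by auto
      qed
      then have "continuous_on {0..1} (\<lambda>ta. s *\<^sub>R P (z (ta * s) t))" by (intro continuous_intros)
      then show "(\<lambda>ta. s *\<^sub>R P (z (ta * s) t)) integrable_on cbox 0 1"
        by (simp add: integrable_continuous_real)
    next
      have "continuous_on (?I \<times> cbox 0 1) (\<lambda>p. M (z (snd p * s) (fst p)))"
      proof (rule continuous_on_compose2[OF cM])
        show "continuous_on (?I \<times> cbox 0 1) (\<lambda>p. z (snd p * s) (fst p))" unfolding z_def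
          by (intro continuous_intros)
        show "(\<lambda>p. z (snd p * s) (fst p)) ` (?I \<times> cbox 0 1) \<subseteq> S" using zS[OF tin[OF _ s]] by auto
      qed
      then have "continuous_on (?I \<times> cbox 0 1) (\<lambda>p. s *\<^sub>R M (z (snd p * s) (fst p)))"
        by (intro continuous_intros)
      then show "continuous_on (?I \<times> cbox 0 1) (\<lambda>(t, ta). s *\<^sub>R M (z (ta * s) t))"
        by (simp add: case_prod_beta)
    qed (use e in auto)
    then have R: "((\<lambda>t. integral {0..1} (\<lambda>ta. s *\<^sub>R P (z (ta * s) t))) has_vector_derivative
             integral {0..1} (\<lambda>ta. s *\<^sub>R M (z (ta * s) 0))) (at 0)"
      using at_within_open[of 0 ?I] e by simp
    have R': "((\<lambda>t. G (z s t) - G (z 0 t)) has_vector_derivative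
             integral {0..1} (\<lambda>ta. s *\<^sub>R M (z (ta * s) 0))) (at 0)"
      by (rule has_vector_derivative_transform_within_open[OF R, of ?I]) (use e step1[OF s] in auto)
    show ?thesis by (rule vector_derivative_unique_at[OF L R'])
  qed
  define J where "J h = integral {0..1} (\<lambda>ta. M (z (ta * h) 0))" for h
  have contJ: "continuous_on ?I J"
    unfolding J_def box_real(2)[symmetric]
  proof (rule integral_continuous_on_param)
    have "continuous_on (?I \<times> cbox 0 1) (\<lambda>p. M (z (snd p * fst p) 0))"
    proof (rule continuous_on_compose2[OF cM])
      show "continuous_on (?I \<times> cbox 0 1) (\<lambda>p. z (snd p * fst p) 0)" unfolding z_def
        by (intro continuous_intros)
      show "(\<lambda>p. z (snd p * fst p) 0) ` (?I \<times> cbox 0 1) \<subseteq> S" using zS[OF tin] e by auto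
    qed
    then show "continuous_on (?I \<times> cbox 0 1) (\<lambda>(h, ta). M (z (ta * h) 0))"
      by (simp add: case_prod_beta)
  qed
  have "isCont J 0" using contJ e by (simp add: continuous_on_eq_continuous_at)
  moreover have "J 0 = M x" by (simp add: J_def z_def)
  ultimately have limJ: "(J \<longlongrightarrow> M x) (at 0)" by (metis isCont_def)
  have evJ: "\<forall>\<^sub>F h in at 0. Q (x + h *\<^sub>R u) - Q (x + 0 *\<^sub>R u) = h *\<^sub>R J h"
  proof -
    have "\<forall>\<^sub>F h in at 0. h \<in> ?I" using e by (intro eventually_at_in_open') auto
    then show ?thesis
    proof (rule eventually_mono)
      fix h assume "h \<in> ?I"
      then have "\<bar>h\<bar> < e" by auto
      from step2[OF this] show "Q (x + h *\<^sub>R u) - Q (x + 0 *\<^sub>R u) = h *\<^sub>R J h"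
        by (simp add: z_def J_def)
    qed
  qed
  show ?thesis by (rule hasvd_from_quotient[OF evJ limJ])
qed

context dom
begin

lemma swap:
  fixes G :: "'a \<times> real \<Rightarrow> 'b::euclidean_space"
  assumes C: "Ck U S (Suc (Suc n)) G" and x: "x \<in> S" and u: "u \<in> U" and w: "w \<in> U"
  shows "pd (pd G w) u x = pd (pd G u) w x"
proof -
  have uW: "u \<in> W" and wW: "w \<in> W" using u w UW by auto
  obtain e where e: "e > 0" "\<forall>s t. \<bar>s\<bar> < e \<longrightarrow> \<bar>t\<bar> < e \<longrightarrow> x + s *\<^sub>R u + t *\<^sub>R w \<in> S"
    using plane[OF x uW wW] by blast
  have C0: "C1_on U S G" using Ck_C1[OF C] .
  have C1: "C1_on U S (pd G u)" using Ck_C1[OF Ck_pd[OF C u]] .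
  have "((\<lambda>s. pd G w (x + s *\<^sub>R u)) has_vector_derivative pd (pd G u) w x) (at 0)"
  proof (rule schwarz[OF e, where G=G])
    show "\<forall>y\<in>S. ((\<lambda>sg. G (y + sg *\<^sub>R u)) has_vector_derivative pd G u y) (at 0)"
      using has_pd C1_onD[OF C0 u] by blast
    show "\<forall>y\<in>S. ((\<lambda>sg. G (y + sg *\<^sub>R w)) has_vector_derivative pd G w y) (at 0)"
      using has_pd C1_onD[OF C0 w] by blast
    show "\<forall>y\<in>S. ((\<lambda>sg. pd G u (y + sg *\<^sub>R w)) has_vector_derivative pd (pd G u) w y) (at 0)"
      using has_pd C1_onD[OF C1 w] by blast
    show "continuous_on S (pd G u)" using C1_onC[OF C0 u] by simp
    show "continuous_on S (pd (pd G u) w)" using C1_onC[OF C1 w] by simp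
  qed
  then show ?thesis unfolding pd_def[of "pd G w"] by (rule vector_derivative_at)
qed

end

lemma pd_sum_lin:
  assumes fin: "finite I" and L: "\<And>i. i \<in> I \<Longrightarrow> bounded_linear (L i)"
    and d: "\<And>i. i \<in> I \<Longrightarrow> (\<lambda>t. H i (x + t *\<^sub>R u)) differentiable (at 0)"
  shows "pd (\<lambda>z. \<Sum>i\<in>I. L i (H i z)) u x = (\<Sum>i\<in>I. L i (pd (H i) u x))"
    "(\<lambda>t. \<Sum>i\<in>I. L i (H i (x + t *\<^sub>R u))) differentiable (at 0)"
proof -
  have "((\<lambda>t. \<Sum>i\<in>I. L i (H i (x + t *\<^sub>R u))) has_vector_derivative (\<Sum>i\<in>I. L i (pd (H i) u x))) (at 0)"
    by (intro has_vector_derivative_sum bounded_linear.has_vector_derivative[OF L] has_pd d)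
  then show "pd (\<lambda>z. \<Sum>i\<in>I. L i (H i z)) u x = (\<Sum>i\<in>I. L i (pd (H i) u x))"
    "(\<lambda>t. \<Sum>i\<in>I. L i (H i (x + t *\<^sub>R u))) differentiable (at 0)"
    unfolding pd_def by (auto simp: vector_derivative_at intro: differentiableI_vector)
qed

lemma vdf_cong_open:
  assumes "open N" "r \<in> N" "\<And>t. t \<in> N \<Longrightarrow> f t = g t"
  shows "vdf f r = vdf g r"
  unfolding vdf_def
proof (rule vector_derivative_cong_eq)
  show "\<forall>\<^sub>F x in nhds r. x \<in> UNIV \<longrightarrow> f x = g x"
    unfolding eventually_nhds using assms by blast
qed auto

lemma calc1:
  fixes \<beta> :: "real \<Rightarrow> 'b::real_normed_vector" and k :: nat
  assumes N: "open N" "r \<in> N" "\<forall>t\<in>N. t > 0" and d1: "\<forall>t\<in>N. \<beta> differentiable (at t)"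
    and d2: "vdf \<beta> differentiable (at r)"
  shows "(1/r) *\<^sub>R vdf (\<lambda>t. vdf \<beta> t + (2 * real k / t) *\<^sub>R \<beta> t) r - vdf (vdf (\<lambda>t. (1/t) *\<^sub>R \<beta> t)) r
       = (2 * real (Suc k) / r) *\<^sub>R vdf (\<lambda>t. (1/t) *\<^sub>R \<beta> t) r"
proof -
  define X where "X = vdf (vdf \<beta>) r"
  define Y where "Y = vdf \<beta> r"
  define Z where "Z = \<beta> r"
  have r: "r > 0" using N by auto
  have hb: "(\<beta> has_vector_derivative vdf \<beta> t) (at t)" if "t \<in> N" for t
    using d1 that by (simp add: vdf_def vector_derivative_works[symmetric])
  have hb2: "(vdf \<beta> has_vector_derivative X) (at r)"
    using d2 by (simp add: X_def vdf_def vector_derivative_works[symmetric])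
  have inv1: "((\<lambda>t. 1 / t) has_real_derivative (- (1 / t^2))) (at t)" if "t > 0" for t :: real
    using that by (auto intro!: derivative_eq_intros simp: power2_eq_square field_simps)
  have inv2: "((\<lambda>t. - (1 / t^2)) has_real_derivative (2 / t^3)) (at t)" if "t > 0" for t :: real
    using that by (auto intro!: derivative_eq_intros simp: power2_eq_square power3_eq_cube field_simps)
  have g1: "vdf (\<lambda>t. (1/t) *\<^sub>R \<beta> t) t = (1/t) *\<^sub>R vdf \<beta> t + (- (1/t^2)) *\<^sub>R \<beta> t" if t: "t \<in> N" for t
    unfolding vdf_def[of "\<lambda>t. (1/t) *\<^sub>R \<beta> t"]
    by (rule vector_derivative_at, rule has_vector_derivative_scaleR[OF inv1 hb[OF t]]) (use N t in auto)
  have "vdf (vdf (\<lambda>t. (1/t) *\<^sub>R \<beta> t)) r = vdf (\<lambda>t. (1/t) *\<^sub>R vdf \<beta> t + (- (1/t^2)) *\<^sub>R \<beta> t) r"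
    by (rule vdf_cong_open[OF N(1,2)]) (use g1 in auto)
  also have "\<dots> = ((1/r) *\<^sub>R X + (- (1/r^2)) *\<^sub>R Y) + ((- (1/r^2)) *\<^sub>R Y + (2/r^3) *\<^sub>R Z)"
    unfolding vdf_def[of "\<lambda>t. (1/t) *\<^sub>R vdf \<beta> t + (- (1/t^2)) *\<^sub>R \<beta> t"] Y_def Z_def
    by (intro vector_derivative_at has_vector_derivative_add has_vector_derivative_scaleR inv1 inv2 hb2 hb r N)
  finally have e1: "vdf (vdf (\<lambda>t. (1/t) *\<^sub>R \<beta> t)) r = ((1/r) *\<^sub>R X + (- (1/r^2)) *\<^sub>R Y) + ((- (1/r^2)) *\<^sub>R Y + (2/r^3) *\<^sub>R Z)" .
  have dk: "((\<lambda>t. 2 * real k / t) has_real_derivative (- (2 * real k / r^2))) (at r)"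
    using r by (auto intro!: derivative_eq_intros simp: power2_eq_square field_simps)
  have e2: "vdf (\<lambda>t. vdf \<beta> t + (2 * real k / t) *\<^sub>R \<beta> t) r = X + ((2 * real k / r) *\<^sub>R Y + (- (2 * real k / r^2)) *\<^sub>R Z)"
    unfolding vdf_def[of "\<lambda>t. vdf \<beta> t + (2 * real k / t) *\<^sub>R \<beta> t"] Y_def Z_def
    by (intro vector_derivative_at has_vector_derivative_add has_vector_derivative_scaleR dk hb2 hb N)
  have e3: "vdf (\<lambda>t. (1/t) *\<^sub>R \<beta> t) r = (1/r) *\<^sub>R Y + (- (1/r^2)) *\<^sub>R Z"
    using g1[OF N(2)] by (simp add: Y_def Z_def)
  have "(1/r) *\<^sub>R (X + ((2 * real k / r) *\<^sub>R Y + (- (2 * real k / r^2)) *\<^sub>R Z))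
        - (((1/r) *\<^sub>R X + (- (1/r^2)) *\<^sub>R Y) + ((- (1/r^2)) *\<^sub>R Y + (2/r^3) *\<^sub>R Z))
        = (2 * real (Suc k) / r) *\<^sub>R ((1/r) *\<^sub>R Y + (- (1/r^2)) *\<^sub>R Z)"
  proof -
    have "(1/r) *\<^sub>R (X + ((2 * real k / r) *\<^sub>R Y + (- (2 * real k / r^2)) *\<^sub>R Z))
        - (((1/r) *\<^sub>R X + (- (1/r^2)) *\<^sub>R Y) + ((- (1/r^2)) *\<^sub>R Y + (2/r^3) *\<^sub>R Z))
        = ((1/r) * (2 * real k / r) + 2 / r^2) *\<^sub>R Y + ((1/r) * (- (2 * real k / r^2)) - 2/r^3) *\<^sub>R Z"
      by (simp add: algebra_simps) (simp add: scaleR_add_left[symmetric])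
    also have "\<dots> = ((2 * real (Suc k) / r) * (1/r)) *\<^sub>R Y + ((2 * real (Suc k) / r) * (- (1/r^2))) *\<^sub>R Z"
    proof -
      have "(1/r) * (2 * real k / r) + 2 / r^2 = (2 * real (Suc k) / r) * (1/r)"
        using r by (simp add: field_simps power2_eq_square)
      moreover have "(1/r) * (- (2 * real k / r^2)) - 2/r^3 = (2 * real (Suc k) / r) * (- (1/r^2))"
        using r by (simp add: field_simps power2_eq_square power3_eq_cube)
      ultimately show ?thesis by simp
    qed
    also have "\<dots> = (2 * real (Suc k) / r) *\<^sub>R ((1/r) *\<^sub>R Y + (- (1/r^2)) *\<^sub>R Z)"
      by (simp only: scaleR_add_right scaleR_scaleR)
    finally show ?thesis .
  qed
  then show ?thesis using e1 e2 e3 by simp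
qed

lemma funpow_iter:
  fixes F :: "'a::real_normed_vector \<times> real \<Rightarrow> 'b::real_normed_vector"
  shows "(vdf ^^ n) (\<lambda>t. F (y, t)) = (\<lambda>t. iter_pd (replicate n (0, 1)) F (y, t))"
proof (induction n)
  case 0
  then show ?case by simp
next
  case (Suc n)
  have "(vdf ^^ Suc n) (\<lambda>t. F (y, t)) = vdf (\<lambda>t. iter_pd (replicate n (0, 1)) F (y, t))"
    using Suc by simp
  also have "\<dots> = (\<lambda>t. dr (iter_pd (replicate n (0, 1)) F) (y, t))"
    by (rule ext) (simp add: dr_eq)
  also have "\<dots> = (\<lambda>t. iter_pd (replicate (Suc n) (0, 1)) F (y, t))"
    by (simp add: dr_def)
  finally show ?case .
qed

lemma ak_eq:
  fixes F :: "'a::real_normed_vector \<times> real \<Rightarrow> 'a"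
  shows "ak (\<lambda>t. F (y, t)) k = (\<lambda>t. Ak_seq F k (y, t))"
proof (induction k)
  case (Suc k)
  show ?case by (rule ext) (simp add: Suc dr_eq)
qed simp

lemma bk_eq:
  fixes F :: "'a::real_normed_vector \<times> real \<Rightarrow> 'a"
  shows "bk (\<lambda>t. F (y, t)) k = (\<lambda>t. Bk_seq F k (y, t))"
proof (induction k)
  case (Suc k)
  show ?case by (rule ext) (simp add: Suc dr_eq)
qed simp

lemma smooth_line:
  fixes F :: "'a::real_normed_vector \<times> real \<Rightarrow> 'b::real_normed_vector"
  assumes C: "Cinf_on U D F" and e0U: "(0, 1) \<in> U" and inD: "\<forall>t\<in>I. (y, t) \<in> D"
  shows "smooth_on I (\<lambda>t. F (y, t))"
  unfolding smooth_on_def funpow_iter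
proof (intro allI ballI)
  fix n t assume t: "t \<in> I"
  have "set (replicate n (0::'a, 1::real)) \<subseteq> U" using e0U by (auto simp: set_replicate_conv_if)
  then have "C1_on U D (iter_pd (replicate n (0, 1)) F)" using C unfolding Cinf_on_def by blast
  then have "(\<lambda>s. iter_pd (replicate n (0, 1)) F ((y, t) + s *\<^sub>R (0, 1))) differentiable (at 0)"
    using C1_onD e0U inD t by blast
  then show "(\<lambda>t. iter_pd (replicate n (0, 1)) F (y, t)) differentiable (at t)"
    using dr_diff by blast
qed

lemma lim_right:
  fixes f g :: "real \<Rightarrow> 'b::real_normed_vector"
  assumes "isCont g 0" "d > 0" "\<And>r. 0 < r \<Longrightarrow> r < d \<Longrightarrow> f r = g r"
  shows "(f \<longlongrightarrow> g 0) (at_right 0)"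
proof -
  have "(g \<longlongrightarrow> g 0) (at_right 0)"
    using assms(1) by (simp add: isCont_def tendsto_mono[OF at_le[OF subset_UNIV]])
  moreover have "\<forall>\<^sub>F r in at_right 0. g r = f r"
    unfolding eventually_at_right_field using assms by (intro exI[of _ d]) auto
  ultimately show ?thesis by (rule Lim_transform_eventually)
qed

lemma part2:
  fixes F1 F2 :: "'a::euclidean_space \<times> real \<Rightarrow> 'a" and k :: nat
  assumes I: "I = {-d<..<d}" "d > 0" and inD: "\<forall>t\<in>I. (y, t) \<in> D"
   and C1: "Cinf_on U D F1" and C2: "Cinf_on U D F2" and e0U: "(0, 1) \<in> U"
   and ev: "\<forall>t\<in>I. F1 (y, -t) = F1 (y, t)" and od: "\<forall>t\<in>I. F2 (y, -t) = - F2 (y, t)"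
   and idt: "\<forall>r. 0 < r \<longrightarrow> r < d \<longrightarrow>
      Dxp mul v p (Ak_seq F1 k) (y, r) - dr (Bk_seq F2 k) (y, r) = (2 * real k / r) *\<^sub>R Bk_seq F2 k (y, r) \<and>
      Dxp_bar mul v p (Bk_seq F2 k) (y, r) + dr (Ak_seq F1 k) (y, r) = 0"
  shows "\<exists>a b c d e.
               ((\<lambda>r. Dxp mul v p (Ak_seq F1 k) (y, r)) \<longlongrightarrow> a) (at_right 0) \<and>
               ((\<lambda>r. dr (Bk_seq F2 k) (y, r)) \<longlongrightarrow> b) (at_right 0) \<and>
               ((\<lambda>r. (2 * real k / r) *\<^sub>R Bk_seq F2 k (y, r)) \<longlongrightarrow> c) (at_right 0) \<and>
               ((\<lambda>r. Dxp_bar mul v p (Bk_seq F2 k) (y, r)) \<longlongrightarrow> d) (at_right 0) \<and>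
               ((\<lambda>r. dr (Ak_seq F1 k) (y, r)) \<longlongrightarrow> e) (at_right 0) \<and>
               a - b = c \<and> d + e = 0"
proof -
  let ?g = "\<lambda>t. F1 (y, t)" and ?h = "\<lambda>t. F2 (y, t)"
  have smg: "smooth_on I ?g" by (rule smooth_line[OF C1 e0U inD])
  have smh: "smooth_on I ?h" by (rule smooth_line[OF C2 e0U inD])
  have 0: "0 \<in> I" using I by simp
  obtain E where E: "smooth_on I E" "\<forall>t\<in>I. E (-t) = E t" "\<forall>r\<in>I. r > 0 \<longrightarrow> ak ?g k r = E r"
    using ak_ext[OF I smg] ev by blast
  obtain Ob where Ob: "smooth_on I Ob" "\<forall>t\<in>I. Ob (-t) = - Ob t" "\<forall>r\<in>I. r > 0 \<longrightarrow> bk ?h k r = Ob r"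
    using bk_ext[OF I smh] od by blast
  obtain H where H: "smooth_on I H" "\<forall>t\<in>I. t \<noteq> 0 \<longrightarrow> H t = (1/t) *\<^sub>R Ob t"
    using odd_div_smooth[OF I Ob(1,2)] by blast
  have oI: "open I" using I by simp
  have rI: "0 < r \<Longrightarrow> r < d \<Longrightarrow> r \<in> I" for r using I by auto
  have cE: "isCont (vdf E) 0" using smooth_isCont[OF E(1) 0, of 1] by simp
  have cO: "isCont (vdf Ob) 0" using smooth_isCont[OF Ob(1) 0, of 1] by simp
  have cH: "isCont (\<lambda>t. (2 * real k) *\<^sub>R H t) 0" using smooth_isCont[OF H(1) 0, of 0] by (simp add: continuous_intros)
  have lime: "((\<lambda>r. dr (Ak_seq F1 k) (y, r)) \<longlongrightarrow> vdf E 0) (at_right 0)"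
  proof (rule lim_right[OF cE I(2)])
    fix r assume r: "0 < r" "r < d"
    have "dr (Ak_seq F1 k) (y, r) = vdf (ak ?g k) r" by (simp add: dr_eq ak_eq)
    also have "\<dots> = vdf E r" by (rule vdf_cong_pos[OF I(1) rI[OF r] r(1)]) (use E(3) in auto)
    finally show "dr (Ak_seq F1 k) (y, r) = vdf E r" .
  qed
  have limb: "((\<lambda>r. dr (Bk_seq F2 k) (y, r)) \<longlongrightarrow> vdf Ob 0) (at_right 0)"
  proof (rule lim_right[OF cO I(2)])
    fix r assume r: "0 < r" "r < d"
    have "dr (Bk_seq F2 k) (y, r) = vdf (bk ?h k) r" by (simp add: dr_eq bk_eq)
    also have "\<dots> = vdf Ob r" by (rule vdf_cong_pos[OF I(1) rI[OF r] r(1)]) (use Ob(3) in auto)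
    finally show "dr (Bk_seq F2 k) (y, r) = vdf Ob r" .
  qed
  have limc: "((\<lambda>r. (2 * real k / r) *\<^sub>R Bk_seq F2 k (y, r)) \<longlongrightarrow> (2 * real k) *\<^sub>R H 0) (at_right 0)"
  proof (rule lim_right[OF cH I(2)])
    fix r assume r: "0 < r" "r < d"
    have "Bk_seq F2 k (y, r) = Ob r" using Ob(3) rI[OF r] r bk_eq[of F2 y k] by (metis)
    then show "(2 * real k / r) *\<^sub>R Bk_seq F2 k (y, r) = (2 * real k) *\<^sub>R H r"
      using H(2) rI[OF r] r by simp
  qed
  have lima: "((\<lambda>r. Dxp mul v p (Ak_seq F1 k) (y, r)) \<longlongrightarrow> vdf Ob 0 + (2 * real k) *\<^sub>R H 0) (at_right 0)"
  proof -
    have "((\<lambda>r. dr (Bk_seq F2 k) (y, r) + (2 * real k / r) *\<^sub>R Bk_seq F2 k (y, r)) \<longlongrightarrow> vdf Ob 0 + (2 * real k) *\<^sub>R H 0) (at_right 0)"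
      by (rule tendsto_add[OF limb limc])
    moreover have "\<forall>\<^sub>F r in at_right 0. dr (Bk_seq F2 k) (y, r) + (2 * real k / r) *\<^sub>R Bk_seq F2 k (y, r) = Dxp mul v p (Ak_seq F1 k) (y, r)"
      unfolding eventually_at_right_field using idt I(2)
      by (intro exI[of _ d]) (auto simp: algebra_simps)
    ultimately show ?thesis by (rule Lim_transform_eventually)
  qed
  have limd: "((\<lambda>r. Dxp_bar mul v p (Bk_seq F2 k) (y, r)) \<longlongrightarrow> - vdf E 0) (at_right 0)"
  proof -
    have "((\<lambda>r. - dr (Ak_seq F1 k) (y, r)) \<longlongrightarrow> - vdf E 0) (at_right 0)"
      by (rule tendsto_minus[OF lime])
    moreover have "\<forall>\<^sub>F r in at_right 0. - dr (Ak_seq F1 k) (y, r) = Dxp_bar mul v p (Bk_seq F2 k) (y, r)"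
      unfolding eventually_at_right_field
    proof (intro exI[of _ d] conjI allI impI)
      fix r :: real assume r: "0 < r" "r < d"
      then have "Dxp_bar mul v p (Bk_seq F2 k) (y, r) + dr (Ak_seq F1 k) (y, r) = 0" using idt by blast
      then have "Dxp_bar mul v p (Bk_seq F2 k) (y, r) = - dr (Ak_seq F1 k) (y, r)"
        by (simp add: eq_neg_iff_add_eq_0)
      then show "- dr (Ak_seq F1 k) (y, r) = Dxp_bar mul v p (Bk_seq F2 k) (y, r)" by simp
    qed (use I in auto)
    ultimately show ?thesis by (rule Lim_transform_eventually)
  qed
  show ?thesis using lima limb limc limd lime by fastforce
qed

lemma C1_on_subset: "S' \<subseteq> S \<Longrightarrow> C1_on U S F \<Longrightarrow> C1_on U S' F"
  unfolding C1_on_def by (auto intro: continuous_on_subset)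

lemma Ck_subset: "S' \<subseteq> S \<Longrightarrow> Ck U S n F \<Longrightarrow> Ck U S' n F"
  unfolding Ck_def using C1_on_subset by blast

definition Lb :: "('a \<Rightarrow> 'a \<Rightarrow> 'a) \<Rightarrow> (nat \<Rightarrow> 'a) \<Rightarrow> nat \<Rightarrow> 'a \<Rightarrow> 'a::real_vector" where
  "Lb mul v s = (if s = 0 then (\<lambda>b. b) else (\<lambda>b. - mul (v s) b))"

lemma Dxp_bar_sum: "Dxp_bar mul v p F z = (\<Sum>s=0..p. Lb mul v s (pd F (v s, 0) z))"
proof -
  have "(\<Sum>s=0..p. Lb mul v s (pd F (v s, 0) z)) = Lb mul v 0 (pd F (v 0, 0) z) + (\<Sum>s=Suc 0..p. Lb mul v s (pd F (v s, 0) z))"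
    by (rule sum.atLeast_Suc_atMost) simp
  also have "(\<Sum>s=Suc 0..p. Lb mul v s (pd F (v s, 0) z)) = (\<Sum>s=1..p. - mul (v s) (pd F (v s, 0) z))"
    by (rule sum.cong) (auto simp: Lb_def)
  finally show ?thesis by (simp add: Dxp_bar_def Lb_def sum_negf)
qed

lemma Dxp_fun: "Dxp mul v p F = (\<lambda>z. \<Sum>s=0..p. mul (v s) (pd F (v s, 0) z))"
  by (rule ext) (simp add: Dxp_def)

theorem lemma4p5:
  fixes mul :: "'a::euclidean_space \<Rightarrow> 'a \<Rightarrow> 'a" and one :: 'a and cj :: "'a \<Rightarrow> 'a"
    and v :: "nat \<Rightarrow> 'a" and m p :: nat
    and D :: "('a \<times> real) set" and F1 F2 :: "'a \<times> real \<Rightarrow> 'a"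
  assumes alg: "alt_algebra_inv mul one cj"
    and dim: "DIM('a) > 1"
    and SA_ne: "SA mul one cj \<noteq> {}"
    and basis: "slice_basis mul one cj v m"
    and pm: "p < m"
    and D_sub: "D \<subseteq> span (v ` {0..p}) \<times> UNIV"
    and D_open: "openin (top_of_set (span (v ` {0..p}) \<times> UNIV)) D"
    and D_sym: "\<And>y r. (y, r) \<in> D \<Longrightarrow> (y, - r) \<in> D"
    and reg: "gps_regular_stem mul v p D F1 F2"
    and smooth1: "Cinf_on (dirs v p) D F1"
    and smooth2: "Cinf_on (dirs v p) D F2"
  shows "(\<forall>k::nat. \<forall>y r. (y, r) \<in> D \<longrightarrow> r > 0 \<longrightarrow>
            Dxp mul v p (Ak_seq F1 k) (y, r) - dr (Bk_seq F2 k) (y, r)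
              = (2 * real k / r) *\<^sub>R Bk_seq F2 k (y, r) \<and>
            Dxp_bar mul v p (Bk_seq F2 k) (y, r) + dr (Ak_seq F1 k) (y, r) = 0)
       \<and> (\<forall>k::nat. \<forall>y. (y, 0) \<in> D \<longrightarrow>
            (\<exists>a b c d e.
               ((\<lambda>r. Dxp mul v p (Ak_seq F1 k) (y, r)) \<longlongrightarrow> a) (at_right 0) \<and>
               ((\<lambda>r. dr (Bk_seq F2 k) (y, r)) \<longlongrightarrow> b) (at_right 0) \<and>
               ((\<lambda>r. (2 * real k / r) *\<^sub>R Bk_seq F2 k (y, r)) \<longlongrightarrow> c) (at_right 0) \<and>
               ((\<lambda>r. Dxp_bar mul v p (Bk_seq F2 k) (y, r)) \<longlongrightarrow> d) (at_right 0) \<and>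
               ((\<lambda>r. dr (Ak_seq F1 k) (y, r)) \<longlongrightarrow> e) (at_right 0) \<and>
               a - b = c \<and> d + e = 0))"
proof -
  define W where "W = span (v ` {0..p}) \<times> (UNIV :: real set)"
  define U where "U = dirs v p"
  define Sp where "Sp = D \<inter> {x. 0 < snd x}"
  define e0 :: "'a \<times> real" where "e0 = (0, 1)"
  have subW: "subspace W" unfolding W_def by (intro subspace_Times subspace_span subspace_UNIV)
  have UW: "U \<subseteq> W" unfolding U_def W_def dirs_def by (auto intro: span_base span_zero)
  have Sopen: "openin (top_of_set W) Sp"
    unfolding Sp_def W_def
    by (rule openin_Int_open[OF D_open]) (rule open_Collect_less; intro continuous_intros)
  interpret dom W U Sp by unfold_locales (rule subW UW Sopen)+
  have e0U: "e0 \<in> U" unfolding U_def dirs_def e0_def by auto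
  have e0W: "e0 \<in> W" using e0U UW by auto
  have usU: "(v s, 0) \<in> U" if "s \<le> p" for s using that unfolding U_def dirs_def by auto
  have Spos: "\<forall>x\<in>Sp. snd x > 0" by (simp add: Sp_def)
  have SpD: "Sp \<subseteq> D" by (auto simp: Sp_def)
  have blm: "bounded_linear (mul a)" for a
  proof -
    have "bilinear mul" using alg by (simp add: alt_algebra_inv_def)
    then have "linear (\<lambda>b. mul a b)" by (simp add: bilinear_def)
    then show ?thesis by (simp add: linear_conv_bounded_linear)
  qed
  have blLb: "bounded_linear (Lb mul v s)" for s
    unfolding Lb_def using blm by (auto intro: bounded_linear_ident bounded_linear_minus)
  have CF1: "Ck U Sp n F1" for n
    using smooth1 Ck_subset[OF SpD] unfolding U_def Cinf_Ck by blast
  have CF2: "Ck U Sp n F2" for n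
    using smooth2 Ck_subset[OF SpD] unfolding U_def Cinf_Ck by blast
  have eqA: "Ak_seq F1 (Suc k) = (\<lambda>z. (1 / snd z) ^ 1 *\<^sub>R pd (Ak_seq F1 k) e0 z)" for k
    by (rule ext) (simp add: dr_def e0_def)
  have eqB: "Bk_seq F2 (Suc k) = pd (\<lambda>z. (1 / snd z) ^ 1 *\<^sub>R Bk_seq F2 k z) e0" for k
    by (rule ext) (simp add: dr_def e0_def)
  have AC: "Ck U Sp n (Ak_seq F1 k)" for k n
  proof (induction k arbitrary: n)
    case 0
    then show ?case using CF1 by simp
  next
    case (Suc k)
    show ?case unfolding eqA by (rule Ck_recip[OF Spos Ck_pd[OF Suc.IH e0U]])
  qed
  have BC: "Ck U Sp n (Bk_seq F2 k)" for k n
  proof (induction k arbitrary: n)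
    case 0
    then show ?case using CF2 by simp
  next
    case (Suc k)
    show ?case unfolding eqB by (rule Ck_pd[OF Ck_recip[OF Spos Suc.IH] e0U])
  qed
  have main: "\<forall>x\<in>Sp. Dxp mul v p (Ak_seq F1 k) x - dr (Bk_seq F2 k) x = (2 * real k / snd x) *\<^sub>R Bk_seq F2 k x
      \<and> Dxp_bar mul v p (Bk_seq F2 k) x + dr (Ak_seq F1 k) x = 0" for k
  proof (induction k)
    case 0
    show ?case
    proof
      fix x assume x: "x \<in> Sp"
      then have "x \<in> D" using SpD by auto
      then show "Dxp mul v p (Ak_seq F1 0) x - dr (Bk_seq F2 0) x = (2 * real 0 / snd x) *\<^sub>R Bk_seq F2 0 x
        \<and> Dxp_bar mul v p (Bk_seq F2 0) x + dr (Ak_seq F1 0) x = 0"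
        using reg by (simp add: gps_regular_stem_def)
    qed
  next
    case (Suc k)
    let ?A = "Ak_seq F1 k" and ?B = "Bk_seq F2 k"
    let ?A' = "Ak_seq F1 (Suc k)" and ?B' = "Bk_seq F2 (Suc k)"
    show ?case
    proof
      fix x assume x: "x \<in> Sp"
      obtain y r where xyr: "x = (y, r)" by (cases x)
      have r: "r > 0" using x Spos xyr by auto
      have a1: "pd ?A' (v s, 0) x = (1/r) *\<^sub>R pd (pd ?A (v s, 0)) e0 x" if s: "s \<le> p" for s
      proof -
        have d: "(\<lambda>t. pd ?A e0 (x + t *\<^sub>R (v s, 0))) differentiable (at 0)"
          by (rule C1_onD[OF Ck_C1[OF Ck_pd[OF AC e0U]] usU[OF s] x])
        have "pd ?A' (v s, 0) x = (1/r) *\<^sub>R pd (pd ?A e0) (v s, 0) x"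
          unfolding eqA using pd_recip_eq[OF _ d, of 1] r xyr by simp
        also have "pd (pd ?A e0) (v s, 0) x = pd (pd ?A (v s, 0)) e0 x"
          by (rule swap[OF AC x usU[OF s] e0U])
        finally show ?thesis .
      qed
      have b1: "Dxp mul v p ?A' x = (1/r) *\<^sub>R pd (Dxp mul v p ?A) e0 x"
      proof -
        have "Dxp mul v p ?A' x = (\<Sum>s=0..p. mul (v s) ((1/r) *\<^sub>R pd (pd ?A (v s, 0)) e0 x))"
          unfolding Dxp_def by (rule sum.cong[OF refl]) (simp add: a1 del: Ak_seq.simps)
        also have "\<dots> = (1/r) *\<^sub>R (\<Sum>s=0..p. mul (v s) (pd (pd ?A (v s, 0)) e0 x))"
          by (simp add: scaleR_sum_right linear_scale[OF bounded_linear.linear[OF blm]])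
        also have "(\<Sum>s=0..p. mul (v s) (pd (pd ?A (v s, 0)) e0 x)) = pd (Dxp mul v p ?A) e0 x"
          unfolding Dxp_fun[of mul v p ?A]
        proof (rule pd_sum_lin(1)[symmetric, where I="{0..p}" and L="\<lambda>s. mul (v s)" and H="\<lambda>s. pd ?A (v s, 0)"])
          fix s assume "s \<in> {0..p}"
          then have s: "s \<le> p" by simp
          show "(\<lambda>t. pd ?A (v s, 0) (x + t *\<^sub>R e0)) differentiable (at 0)"
            by (rule C1_onD[OF Ck_C1[OF Ck_pd[OF AC usU[OF s]]] e0U x])
        qed (auto intro: blm)
        finally show ?thesis .
      qed
      define \<beta> where "\<beta> = (\<lambda>t. ?B (y, t))"
      define \<gamma> where "\<gamma> = (\<lambda>t. (1/t) *\<^sub>R \<beta> t)"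
      have c1: "pd (Dxp mul v p ?A) e0 x = vdf (\<lambda>t. vdf \<beta> t + (2 * real k / t) *\<^sub>R \<beta> t) r"
      proof -
        have "pd (Dxp mul v p ?A) e0 x = pd (\<lambda>z. dr ?B z + (2 * real k / snd z) *\<^sub>R ?B z) e0 x"
        proof (rule pd_cong[OF x e0W])
          fix z assume "z \<in> Sp"
          then have "Dxp mul v p ?A z - dr ?B z = (2 * real k / snd z) *\<^sub>R ?B z" using Suc.IH by blast
          then show "Dxp mul v p ?A z = dr ?B z + (2 * real k / snd z) *\<^sub>R ?B z"
            by (simp add: algebra_simps)
        qed
        also have "\<dots> = dr (\<lambda>z. dr ?B z + (2 * real k / snd z) *\<^sub>R ?B z) (y, r)"
          by (simp add: dr_def e0_def xyr)
        also have "\<dots> = vdf (\<lambda>t. vdf \<beta> t + (2 * real k / t) *\<^sub>R \<beta> t) r"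
          by (simp add: dr_eq \<beta>_def)
        finally show ?thesis .
      qed
      have Bfun: "(\<lambda>t. ?B' (y, t)) = vdf \<gamma>"
        by (rule ext) (simp add: dr_eq \<gamma>_def \<beta>_def)
      have d1: "?B' x = vdf \<gamma> r" using Bfun xyr by metis
      have d2: "dr ?B' x = vdf (vdf \<gamma>) r" unfolding xyr dr_eq Bfun ..
      obtain \<epsilon> where \<epsilon>: "\<epsilon> > 0" "\<forall>s t. \<bar>s\<bar> < \<epsilon> \<longrightarrow> \<bar>t\<bar> < \<epsilon> \<longrightarrow> x + s *\<^sub>R e0 + t *\<^sub>R e0 \<in> Sp"
        using plane[OF x e0W e0W] by blast
      define N where "N = {r - \<epsilon><..<r + \<epsilon>}"
      have NSp: "(y, t) \<in> Sp" if "t \<in> N" for t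
      proof -
        have "\<bar>t - r\<bar> < \<epsilon>" "\<bar>0::real\<bar> < \<epsilon>" using that \<epsilon>(1) by (auto simp: N_def abs_less_iff)
        then have "x + (t - r) *\<^sub>R e0 + 0 *\<^sub>R e0 \<in> Sp" using \<epsilon>(2) by blast
        then show ?thesis by (simp add: xyr e0_def)
      qed
      have N: "open N" "r \<in> N" using \<epsilon> by (auto simp: N_def)
      have Npos: "\<forall>t\<in>N. t > 0"
      proof
        fix t assume "t \<in> N"
        from Spos NSp[OF this] show "t > 0" by auto
      qed
      have dB: "\<forall>t\<in>N. \<beta> differentiable (at t)"
      proof
        fix t assume "t \<in> N"
        then have "(\<lambda>s. ?B ((y, t) + s *\<^sub>R (0, 1))) differentiable (at 0)"
          using C1_onD[OF Ck_C1[OF BC] e0U NSp] by (simp add: e0_def)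
        then show "\<beta> differentiable (at t)" unfolding \<beta>_def using dr_diff by blast
      qed
      have dB2: "vdf \<beta> differentiable (at r)"
      proof -
        have "(\<lambda>s. pd ?B e0 ((y, r) + s *\<^sub>R (0, 1))) differentiable (at 0)"
          using C1_onD[OF Ck_C1[OF Ck_pd[OF BC e0U]] e0U x] by (simp add: e0_def xyr)
        then have "(\<lambda>t. pd ?B e0 (y, t)) differentiable (at r)" using dr_diff by blast
        moreover have "(\<lambda>t. pd ?B e0 (y, t)) = vdf \<beta>"
          by (rule ext) (simp add: \<beta>_def dr_eq[symmetric] dr_def e0_def)
        ultimately show ?thesis by simp
      qed
      have I1: "Dxp mul v p ?A' x - dr ?B' x = (2 * real (Suc k) / snd x) *\<^sub>R ?B' x"
        using calc1[OF N Npos dB dB2, of k] b1 c1 d1 d2 xyr by (simp add: \<gamma>_def)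
      let ?H = "\<lambda>s z. (1 / snd z) ^ 1 *\<^sub>R pd ?B (v s, 0) z"
      have a2: "pd ?B' (v s, 0) x = pd (?H s) e0 x" if s: "s \<le> p" for s
      proof -
        have "pd ?B' (v s, 0) x = pd (pd (\<lambda>z. (1 / snd z) ^ 1 *\<^sub>R ?B z) e0) (v s, 0) x"
          unfolding eqB ..
        also have "\<dots> = pd (pd (\<lambda>z. (1 / snd z) ^ 1 *\<^sub>R ?B z) (v s, 0)) e0 x"
          by (rule swap[OF Ck_recip[OF Spos BC] x usU[OF s] e0U])
        also have "\<dots> = pd (?H s) e0 x"
        proof (rule pd_cong[OF x e0W])
          fix z assume z: "z \<in> Sp"
          have d: "(\<lambda>t. ?B (z + t *\<^sub>R (v s, 0))) differentiable (at 0)"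
            by (rule C1_onD[OF Ck_C1[OF BC] usU[OF s] z])
          show "pd (\<lambda>z. (1 / snd z) ^ 1 *\<^sub>R ?B z) (v s, 0) z = ?H s z"
            using pd_recip_eq[OF _ d, of 1] Spos z by simp
        qed
        finally show ?thesis .
      qed
      have b2: "Dxp_bar mul v p ?B' x = pd (\<lambda>z. \<Sum>s=0..p. Lb mul v s (?H s z)) e0 x"
      proof -
        have "Dxp_bar mul v p ?B' x = (\<Sum>s=0..p. Lb mul v s (pd (?H s) e0 x))"
          unfolding Dxp_bar_sum by (rule sum.cong[OF refl]) (simp add: a2 del: Bk_seq.simps)
        also have "\<dots> = pd (\<lambda>z. \<Sum>s=0..p. Lb mul v s (?H s z)) e0 x"
        proof (rule pd_sum_lin(1)[symmetric, where I="{0..p}" and L="Lb mul v" and H="?H"])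
          fix s assume "s \<in> {0..p}"
          then have s: "s \<le> p" by simp
          show "(\<lambda>t. ?H s (x + t *\<^sub>R e0)) differentiable (at 0)"
            by (rule C1_onD[OF Ck_C1[OF Ck_recip[OF Spos Ck_pd[OF BC usU[OF s]]]] e0U x])
        qed (auto intro: blLb)
        finally show ?thesis .
      qed
      have c2: "pd (\<lambda>z. \<Sum>s=0..p. Lb mul v s (?H s z)) e0 x = pd (\<lambda>z. - ?A' z) e0 x"
      proof (rule pd_cong[OF x e0W])
        fix z assume z: "z \<in> Sp"
        have "(\<Sum>s=0..p. Lb mul v s (?H s z)) = (1 / snd z) *\<^sub>R (\<Sum>s=0..p. Lb mul v s (pd ?B (v s, 0) z))"
          by (simp add: scaleR_sum_right linear_scale[OF bounded_linear.linear[OF blLb]])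
        also have "\<dots> = (1 / snd z) *\<^sub>R Dxp_bar mul v p ?B z" by (simp add: Dxp_bar_sum)
        also have "Dxp_bar mul v p ?B z = - dr ?A z"
        proof -
          have "Dxp_bar mul v p ?B z + dr ?A z = 0" using Suc.IH z by blast
          then show ?thesis by (simp add: eq_neg_iff_add_eq_0)
        qed
        finally show "(\<Sum>s=0..p. Lb mul v s (?H s z)) = - ?A' z" by simp
      qed
      have e2: "pd (\<lambda>z. - ?A' z) e0 x = - pd ?A' e0 x"
        using pd_lin(1)[OF bounded_linear_minus[OF bounded_linear_ident] C1_onD[OF Ck_C1[OF AC[of "Suc k"]] e0U x]]
        by (simp del: Ak_seq.simps)
      have I2: "Dxp_bar mul v p ?B' x + dr ?A' x = 0"
        using b2 c2 e2 xyr by (simp add: dr_def e0_def)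
      show "Dxp mul v p ?A' x - dr ?B' x = (2 * real (Suc k) / snd x) *\<^sub>R ?B' x \<and>
        Dxp_bar mul v p ?B' x + dr ?A' x = 0" using I1 I2 by blast
    qed
  qed
  show ?thesis
  proof (rule conjI; intro allI impI)
    fix k y r assume yr: "(y, r) \<in> D" "r > 0"
    then have "(y, r) \<in> Sp" by (simp add: Sp_def)
    then show "Dxp mul v p (Ak_seq F1 k) (y, r) - dr (Bk_seq F2 k) (y, r) = (2 * real k / r) *\<^sub>R Bk_seq F2 k (y, r) \<and>
            Dxp_bar mul v p (Bk_seq F2 k) (y, r) + dr (Ak_seq F1 k) (y, r) = 0"
      using main[of k] by auto
  next
    fix k y assume y0: "(y, 0) \<in> D"
    obtain d where d: "d > 0" "\<forall>x'\<in>W. dist x' (y, 0) < d \<longrightarrow> x' \<in> D"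
      using D_open y0 unfolding W_def[symmetric] by (auto simp: openin_euclidean_subtopology_iff)
    have yspan: "y \<in> span (v ` {0..p})" using D_sub y0 by auto
    have inD: "\<forall>t\<in>{-d<..<d}. (y, t) \<in> D"
    proof
      fix t assume t: "t \<in> {-d<..<d}"
      have "(y, t) \<in> W" using yspan by (simp add: W_def)
      moreover have "dist (y, t) (y, 0) < d" using t by (simp add: dist_Pair_Pair dist_real_def abs_less_iff)
      ultimately show "(y, t) \<in> D" using d by blast
    qed
    have symm: "\<forall>y r. (y, r) \<in> D \<longrightarrow> F1 (y, - r) = F1 (y, r) \<and> F2 (y, - r) = - F2 (y, r)"
      using reg by (simp add: gps_regular_stem_def)
    show "\<exists>a b c d e.
               ((\<lambda>r. Dxp mul v p (Ak_seq F1 k) (y, r)) \<longlongrightarrow> a) (at_right 0) \<and>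
               ((\<lambda>r. dr (Bk_seq F2 k) (y, r)) \<longlongrightarrow> b) (at_right 0) \<and>
               ((\<lambda>r. (2 * real k / r) *\<^sub>R Bk_seq F2 k (y, r)) \<longlongrightarrow> c) (at_right 0) \<and>
               ((\<lambda>r. Dxp_bar mul v p (Bk_seq F2 k) (y, r)) \<longlongrightarrow> d) (at_right 0) \<and>
               ((\<lambda>r. dr (Ak_seq F1 k) (y, r)) \<longlongrightarrow> e) (at_right 0) \<and>
               a - b = c \<and> d + e = 0"
    proof (rule part2[OF refl d(1) inD, where U=U])
      show "Cinf_on U D F1" "Cinf_on U D F2" using smooth1 smooth2 by (simp_all add: U_def)
      show "(0, 1) \<in> U" using e0U by (simp add: e0_def)
      show "\<forall>t\<in>{- d<..<d}. F1 (y, - t) = F1 (y, t)" "\<forall>t\<in>{- d<..<d}. F2 (y, - t) = - F2 (y, t)"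
        using symm inD by auto
      show "\<forall>r. 0 < r \<longrightarrow> r < d \<longrightarrow>
        Dxp mul v p (Ak_seq F1 k) (y, r) - dr (Bk_seq F2 k) (y, r) = (2 * real k / r) *\<^sub>R Bk_seq F2 k (y, r) \<and>
        Dxp_bar mul v p (Bk_seq F2 k) (y, r) + dr (Ak_seq F1 k) (y, r) = 0"
      proof (intro allI impI)
        fix r :: real assume r: "0 < r" "r < d"
        then have "(y, r) \<in> Sp" using inD by (simp add: Sp_def)
        then show "Dxp mul v p (Ak_seq F1 k) (y, r) - dr (Bk_seq F2 k) (y, r) = (2 * real k / r) *\<^sub>R Bk_seq F2 k (y, r) \<and>
          Dxp_bar mul v p (Bk_seq F2 k) (y, r) + dr (Ak_seq F1 k) (y, r) = 0"
          using main[of k] by auto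
      qed
    qed
  qed
qed

end
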